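(* Let $D>0$, $a\in\mathbb{R}$, $g>0$, $r_{\rm g}>0$, $l_{\rm c}>0$, $c_\infty>0$, $\tilde a,\beta\in\mathbb{R}$, $l_{\rm s}>0$, $\gamma>0$ with $\gamma\ge a/D$, and $\bar l>l_{\rm s}$. Let $A,B,C,K,\phi$ be as in the context, and consider a solution $(w(\cdot,t),X(t))$, $X=[z_1\ z_2]^\top$, $l(t)=l_{\rm s}+z_2(t)$, of the target system $$w_t=Dw_{xx}-aw_x-gw-\dot l(t)F(x,X(t)),\quad 0<x<l(t),$$ $$w_x(0,t)=\gamma w(0,t),\quad w(l(t),t)=0,\quad \dot X=(A+BK^\top)X+Bw_x(l(t),t),$$ where $F(x,X)=\big(\phi'(x-l(t))^\top-k(x,l(t))C^\top\big)X$ and $k(x,y)=-\frac1D\phi(x-y)^\top B$. Let $P,Q$ be positive definite with $(A+BK^\top)^\top P+P(A+BK^\top)=-Q$, and define $$V=\frac{d_1}{2}\int_0^{l(t)}w^2dx+\frac12\int_0^{l(t)}w_x^2dx+\frac{\gamma}{2}w(0,t)^2+d_2X^\top PX,\qquad d_1,d_2>0.$$ Assume that for all $t\ge0$, $0<l(t)\le\bar l$ and $|\dot l(t)|\le\bar v$ with $\bar v=\min\{\frac{g}{4\gamma},\frac{D}{8\bar l}\}$. Then for sufficiently large $d_1>0$ and sufficiently small $d_2>0$ there exists a constant $\beta_0>0$ such that for all $t\ge0$ $$\dot V\le-\alpha V+\beta_0V^{3/2},\qquad \alpha=\min\Big\{2g+\frac{D}{4\bar l},\ \frac{4g+d_1D}{2},\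 \frac{\lambda_{\min}(Q)}{2\lambda_{\max}(P)},\ \frac{d_2(2d_1D+g)}{4}\Big\}.$$
   Context: $A=\begin{bmatrix}\tilde a&0\\ r_{\rm g}&0\end{bmatrix}$, $B=[-\beta\ \ 0]^\top$, $C=[1\ \ -\frac{(a-gl_{\rm c})c_\infty}{D}]^\top$; $K\in\mathbb{R}^2$ is chosen so that $A+BK^\top$ is Hurwitz. $N_1=\begin{bmatrix}0&\frac1D(gI+A+\frac aD BC^\top)\\ I&\frac1D(BC^\top+aI)\end{bmatrix}$ and $\phi(x)^\top=[C^\top\ \ K^\top-\frac1D C^\top BC^\top]e^{N_1x}\begin{bmatrix}I\\0\end{bmatrix}\in\mathbb{R}^{1\times2}$. $\lambda_{\min},\lambda_{\max}$ denote smallest/largest eigenvalues. The system describes (after a backstepping transformation) the error dynamics of tubulin concentration in a growing axon of length $l(t)$ with desired length $l_{\rm s}$; note $\dot l(t)=r_{\rm g}z_1(t)$. The constant called $\beta_0$ here is denoted $\beta$ in the paper (distinct from the model constant $\beta$ in $B$). *)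

theory Defs
  imports "HOL-Analysis.Analysis"
begin

primrec mpow :: "'a::comm_ring_1^'n^'n \<Rightarrow> nat \<Rightarrow> 'a^'n^'n" where
  "mpow M 0 = mat 1"
| "mpow M (Suc k) = M ** mpow M k"

definition mat_exp :: "real^'n^'n \<Rightarrow> real^'n^'n" where
  "mat_exp M = (\<Sum>k. (1 / fact k) *\<^sub>R mpow M k)"

definition hurwitz :: "real^'n^'n \<Rightarrow> bool" where
  "hurwitz M \<longleftrightarrow> (\<forall>s::complex. det (mat s - (\<chi> i j. complex_of_real (M $ i $ j))) = 0 \<longrightarrow> Re s < 0)"

definition pos_def :: "real^'n^'n \<Rightarrow> bool" where
  "pos_def M \<longleftrightarrow> transpose M = M \<and> (\<forall>x. x \<noteq> 0 \<longrightarrow> x \<bullet> (M *v x) > 0)"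

definition real_eigenvalues :: "real^'n^'n \<Rightarrow> real set" where
  "real_eigenvalues M = {s. \<exists>v. v \<noteq> 0 \<and> M *v v = s *\<^sub>R v}"

definition lambda_min :: "real^'n^'n \<Rightarrow> real" where
  "lambda_min M = Min (real_eigenvalues M)"

definition lambda_max :: "real^'n^'n \<Rightarrow> real" where
  "lambda_max M = Max (real_eigenvalues M)"

definition Amat :: "real \<Rightarrow> real \<Rightarrow> real^2^2" where
  "Amat atil rg = vector [vector [atil, 0], vector [rg, 0]]"

definition Bvec :: "real \<Rightarrow> real^2" where
  "Bvec beta = vector [- beta, 0]"

definition Cvec :: "real \<Rightarrow> real \<Rightarrow> real \<Rightarrow> real \<Rightarrow> real \<Rightarrow> real^2" where
  "Cvec D a g lc cinf = vector [1, - ((a - g * lc) * cinf / D)]"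

definition outer :: "real^2 \<Rightarrow> real^2 \<Rightarrow> real^2^2" where
  "outer u v = (\<chi> i j. u $ i * v $ j)"

definition block :: "real^2^2 \<Rightarrow> real^2^2 \<Rightarrow> real^2^2 \<Rightarrow> real^2^2 \<Rightarrow> real^(2+2)^(2+2)" where
  "block M11 M12 M21 M22 = (\<chi> i j. case (i, j) of
      (Inl p, Inl q) \<Rightarrow> M11 $ p $ q
    | (Inl p, Inr q) \<Rightarrow> M12 $ p $ q
    | (Inr p, Inl q) \<Rightarrow> M21 $ p $ q
    | (Inr p, Inr q) \<Rightarrow> M22 $ p $ q)"

definition N1 :: "real \<Rightarrow> real \<Rightarrow> real \<Rightarrow> real^2^2 \<Rightarrow> real^2 \<Rightarrow> real^2 \<Rightarrow> real^(2+2)^(2+2)" where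
  "N1 D a g A B C = block 0 ((1 / D) *\<^sub>R (g *\<^sub>R mat 1 + A + (a / D) *\<^sub>R outer B C))
                           (mat 1) ((1 / D) *\<^sub>R (outer B C + a *\<^sub>R mat 1))"

text \<open>phi(x)^T = [C^T, K^T - (1/D) C^T B C^T] e^{N_1 x} [I; 0], as a vector in R^2.\<close>
definition phi :: "real \<Rightarrow> real \<Rightarrow> real \<Rightarrow> real^2^2 \<Rightarrow> real^2 \<Rightarrow> real^2 \<Rightarrow> real^2 \<Rightarrow> real \<Rightarrow> real^2" where
  "phi D a g A B C K x =
     (let r = (\<chi> i::2+2. case i of Inl p \<Rightarrow> C $ p | Inr p \<Rightarrow> K $ p - (1 / D) * (C \<bullet> B) * C $ p);
          E = mat_exp (x *\<^sub>R N1 D a g A B C)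
      in (\<chi> j. \<Sum>i\<in>UNIV. r $ i * E $ i $ Inl j))"

definition kker :: "real \<Rightarrow> real \<Rightarrow> real \<Rightarrow> real^2^2 \<Rightarrow> real^2 \<Rightarrow> real^2 \<Rightarrow> real^2 \<Rightarrow> real \<Rightarrow> real \<Rightarrow> real" where
  "kker D a g A B C K x y = - (1 / D) * (phi D a g A B C K (x - y) \<bullet> B)"

definition Ffun :: "real \<Rightarrow> real \<Rightarrow> real \<Rightarrow> real^2^2 \<Rightarrow> real^2 \<Rightarrow> real^2 \<Rightarrow> real^2 \<Rightarrow> real \<Rightarrow> real \<Rightarrow> real^2 \<Rightarrow> real" where
  "Ffun D a g A B C K l x X =
     vector_derivative (phi D a g A B C K) (at (x - l)) \<bullet> X - kker D a g A B C K x l * (C \<bullet> X)"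

end

theory Submission
  imports Defs
begin

lemma mpow_scale: "mpow (c *\<^sub>R M) n = (c ^ n) *\<^sub>R mpow (M::real^'n^'n) n"
proof (induction n)
  case 0 then show ?case by simp
next
  case (Suc n)
  show ?case
    by (simp add: Suc vec_eq_iff matrix_matrix_mult_def sum_distrib_left algebra_simps)
qed

lemma mpow_entry_bound:
  fixes M :: "real^'n^'n"
  assumes row: "\<And>i. (\<Sum>j\<in>UNIV. \<bar>M$i$j\<bar>) \<le> m" and m0: "m \<ge> 1"
  shows "\<bar>mpow M n $ i $ k\<bar> \<le> m ^ n"
proof (induction n arbitrary: i k)
  case 0 then show ?case by (simp add: mat_def)
next
  case (Suc n)
  have "\<bar>mpow M (Suc n) $ i $ k\<bar> = \<bar>\<Sum>j\<in>UNIV. M$i$j * mpow M n $ j $ k\<bar>"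
    by (simp add: matrix_matrix_mult_def)
  also have "\<dots> \<le> (\<Sum>j\<in>UNIV. \<bar>M$i$j\<bar> * m ^ n)"
    by (rule order_trans[OF sum_abs]) (auto intro!: sum_mono simp: abs_mult intro: mult_left_mono Suc)
  also have "\<dots> = (\<Sum>j\<in>UNIV. \<bar>M$i$j\<bar>) * m ^ n" by (simp add: sum_distrib_right)
  also have "\<dots> \<le> m * m ^ n" using row m0 by (intro mult_right_mono) auto
  finally show ?case by simp
qed

lemma exists_row_bound:
  fixes M :: "real^'n^'n"
  shows "\<exists>m\<ge>1. \<forall>i. (\<Sum>j\<in>UNIV. \<bar>M$i$j\<bar>) \<le> m"
proof -
  define m where "m = 1 + (\<Sum>i\<in>UNIV. \<Sum>j\<in>UNIV. \<bar>M$i$j\<bar>)"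
  have "(\<Sum>j\<in>UNIV. \<bar>M$i$j\<bar>) \<le> m" for i
  proof -
    have "(\<Sum>j\<in>UNIV. \<bar>M$i$j\<bar>) \<le> (\<Sum>i\<in>UNIV. \<Sum>j\<in>UNIV. \<bar>M$i$j\<bar>)"
      by (rule member_le_sum[of i UNIV "\<lambda>i. \<Sum>j\<in>UNIV. \<bar>M$i$j\<bar>"]) (auto intro: sum_nonneg)
    then show ?thesis unfolding m_def by simp
  qed
  moreover have "m \<ge> 1" unfolding m_def by (auto intro!: sum_nonneg)
  ultimately show ?thesis by blast
qed

definition coefm :: "real^'n^'n \<Rightarrow> 'n \<Rightarrow> 'n \<Rightarrow> nat \<Rightarrow> real" where
  "coefm M i k n = mpow M n $ i $ k / fact n"

lemma coefm_summable: "summable (\<lambda>n. coefm M i k n * y ^ n)"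
proof -
  obtain m where m: "m \<ge> 1" "\<And>i. (\<Sum>j\<in>UNIV. \<bar>M$i$j\<bar>) \<le> m" using exists_row_bound[of M] by blast
  have S: "summable (\<lambda>n. inverse (fact n) * (m * \<bar>y\<bar>) ^ n)" by (rule summable_exp)
  have B:  "\<bar>coefm M i k n * y ^ n\<bar> \<le> inverse (fact n) * (m * \<bar>y\<bar>) ^ n" for n
  proof -
    have "\<bar>coefm M i k n * y ^ n\<bar> = \<bar>mpow M n $ i $ k\<bar> * \<bar>y\<bar>^n / fact n"
      by (simp add: coefm_def abs_mult power_abs)
    also have "\<dots> \<le> m ^ n * \<bar>y\<bar>^n / fact n"
      by (intro divide_right_mono mult_right_mono mpow_entry_bound m) auto
    finally show ?thesis by (simp add: power_mult_distrib field_simps)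
  qed
  have "summable (\<lambda>n. \<bar>coefm M i k n * y ^ n\<bar>)"
    by (rule summable_rabs_comparison_test[OF _ S]) (use B in blast)
  then show ?thesis by (rule summable_rabs_cancel)
qed

lemma mat_exp_entry:
  fixes M :: "real^'n^'n"
  shows "mat_exp (y *\<^sub>R M) $ i $ k = (\<Sum>n. coefm M i k n * y ^ n)"
proof -
  define S :: "real^'n^'n" where "S = (\<chi> i k. \<Sum>n. coefm M i k n * y ^ n)"
  have comp: "((1 / fact n) *\<^sub>R mpow (y *\<^sub>R M) n) $ i $ k = coefm M i k n * y ^ n" for n i k
    by (simp add: mpow_scale coefm_def)
  have "(\<lambda>n. (1 / fact n) *\<^sub>R mpow (y *\<^sub>R M) n) sums S"
    unfolding sums_def
  proof (intro vec_tendstoI)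
    fix i k
    have "(\<lambda>n. coefm M i k n * y ^ n) sums (S $ i $ k)"
      unfolding S_def using summable_sums[OF coefm_summable] by simp
    moreover have "(\<Sum>n<x. (1 / fact n) *\<^sub>R mpow (y *\<^sub>R M) n) $ i $ k = (\<Sum>n<x. coefm M i k n * y ^ n)" for x
      by (simp only: sum_component comp)
    ultimately show "((\<lambda>x. (\<Sum>n<x. (1 / fact n) *\<^sub>R mpow (y *\<^sub>R M) n) $ i $ k) \<longlonglongrightarrow> S $ i $ k)"
      unfolding sums_def by simp
  qed
  then have "mat_exp (y *\<^sub>R M) = S" unfolding mat_exp_def by (rule sums_unique[symmetric])
  then show ?thesis by (simp add: S_def)
qed

lemma vec_has_vector_derivative:
  fixes f :: "real \<Rightarrow> real^'n"
  assumes "\<And>j. ((\<lambda>y. f y $ j) has_real_derivative f' j) (at y)"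
  shows "(f has_vector_derivative (\<chi> j. f' j)) (at y)"
  unfolding has_vector_derivative_def
proof (subst has_derivative_componentwise_within, intro ballI)
  fix i :: "real^'n" assume "i \<in> Basis"
  then obtain j where i: "i = axis j 1" by (auto simp: Basis_vec_def)
  have "((\<lambda>y. f y $ j) has_derivative (\<lambda>h. h * f' j)) (at y)"
  proof -
    have e: "(\<lambda>h. h * f' j) = (*) (f' j)" by (auto simp: fun_eq_iff)
    show ?thesis using assms[of j] unfolding e by (simp add: has_field_derivative_def)
  qed
  then show "((\<lambda>x. f x \<bullet> i) has_derivative (\<lambda>x. x *\<^sub>R (\<chi> j. f' j) \<bullet> i)) (at y)"
    by (simp add: i inner_axis)
qed

definition psr :: "(nat \<Rightarrow> real) \<Rightarrow> real \<Rightarrow> real" where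
  "psr c y = (\<Sum>n. c n * y ^ n)"

lemma coefm_diffs_summable: "summable (\<lambda>n. diffs (coefm M i k) n * y ^ n)"
  by (rule termdiff_converges_all) (rule coefm_summable)

lemma psr_deriv: "(psr (coefm M i k) has_real_derivative psr (diffs (coefm M i k)) y) (at y)"
  unfolding psr_def by (rule termdiffs_strong_converges_everywhere) (rule coefm_summable)

lemma psr_diffs_cont: "isCont (psr (diffs (coefm M i k))) y"
  unfolding psr_def by (rule isCont_powser_converges_everywhere) (rule coefm_diffs_summable)

lemma psr_cont: "isCont (psr (coefm M i k)) y"
  unfolding psr_def by (rule isCont_powser_converges_everywhere) (rule coefm_summable)

lemma gen_phi:
  fixes N :: "real^'m^'m" and r :: "real^'m" and sel :: "'n::finite \<Rightarrow> 'm"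
  defines "f \<equiv> (\<lambda>y. (\<chi> j. \<Sum>i\<in>UNIV. r $ i * mat_exp (y *\<^sub>R N) $ i $ sel j) :: real^'n)"
  defines "f' \<equiv> (\<lambda>y. (\<chi> j. \<Sum>i\<in>UNIV. r $ i * psr (diffs (coefm N i (sel j))) y) :: real^'n)"
  shows "(f has_vector_derivative f' y) (at y)" and "continuous_on S f" and "continuous_on S f'"
proof -
  have fe: "f = (\<lambda>y. \<chi> j. \<Sum>i\<in>UNIV. r $ i * psr (coefm N i (sel j)) y)"
    unfolding f_def by (simp add: mat_exp_entry psr_def)
  show "(f has_vector_derivative f' y) (at y)"
    unfolding fe f'_def
    by (rule vec_has_vector_derivative) (auto intro!: derivative_eq_intros psr_deriv simp: mult.commute)
  show "continuous_on S f" unfolding fe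
    by (intro continuous_intros continuous_at_imp_continuous_on ballI psr_cont)
  show "continuous_on S f'" unfolding f'_def
    by (intro continuous_intros continuous_at_imp_continuous_on ballI psr_diffs_cont)
qed

lemma phi_bounds:
  "\<exists>Bd>0. \<forall>y\<in>{-lb..0}. norm (phi D a g A B C K y) \<le> Bd \<and>
        norm (vector_derivative (phi D a g A B C K) (at y)) \<le> Bd"
proof -
  define r where "r = (\<chi> i::2+2. case i of Inl p \<Rightarrow> C $ p | Inr p \<Rightarrow> K $ p - (1 / D) * (C \<bullet> B) * C $ p)"
  define N where "N = N1 D a g A B C"
  define f' where "f' = (\<lambda>y. (\<chi> j. \<Sum>i\<in>UNIV. r $ i * psr (diffs (coefm N i (Inl j))) y) :: real^2)"
  have pe: "phi D a g A B C K = (\<lambda>y. (\<chi> j. \<Sum>i\<in>UNIV. r $ i * mat_exp (y *\<^sub>R N) $ i $ Inl j))"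
    unfolding phi_def r_def N_def Let_def by simp
  note G = gen_phi[where r=r and N=N and sel=Inl, folded pe, folded f'_def]
  have vd: "vector_derivative (phi D a g A B C K) (at y) = f' y" for y
    unfolding f'_def by (rule vector_derivative_at[OF G(1)])
  have c1: "compact (phi D a g A B C K ` {-lb..0})"
    by (rule compact_continuous_image[OF G(2)]) auto
  have c2: "compact (f' ` {-lb..0})"
    by (rule compact_continuous_image[OF G(3)]) auto
  obtain b1 where b1: "b1 > 0" "\<forall>x\<in>phi D a g A B C K ` {-lb..0}. norm x \<le> b1"
    using compact_imp_bounded[OF c1] bounded_pos by metis
  obtain b2 where b2: "b2 > 0" "\<forall>x\<in>f' ` {-lb..0}. norm x \<le> b2"
    using compact_imp_bounded[OF c2] bounded_pos by metis
  show ?thesis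
    by (rule exI[of _ "b1 + b2"]) (use b1 b2 in \<open>auto simp: vd intro: order_trans\<close>)
qed

lemma cont_swap:
  fixes f :: "real \<Rightarrow> real \<Rightarrow> real"
  assumes "continuous_on (A \<times> B) (\<lambda>p. f (fst p) (snd p))" "S \<subseteq> B" "R \<subseteq> A"
  shows "continuous_on (S \<times> R) (\<lambda>p. f (snd p) (fst p))"
proof -
  have "continuous_on (S \<times> R) ((\<lambda>p. f (fst p) (snd p)) \<circ> (\<lambda>p. (snd p, fst p)))"
    by (rule continuous_on_compose, force intro!: continuous_intros, rule continuous_on_subset[OF assms(1)]) (use assms(2,3) in auto)
  then show ?thesis by (simp add: o_def)
qed

lemma cont_slice:
  fixes f :: "real \<Rightarrow> real \<Rightarrow> real"
  assumes "continuous_on (A \<times> B) (\<lambda>p. f (fst p) (snd p))" "S \<subseteq> A" "s \<in> B"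
  shows "continuous_on S (\<lambda>x. f x s)"
proof -
  have "continuous_on S ((\<lambda>p. f (fst p) (snd p)) \<circ> (\<lambda>x. (x, s)))"
    by (rule continuous_on_compose, force intro!: continuous_intros, rule continuous_on_subset[OF assms(1)]) (use assms(2,3) in auto)
  then show ?thesis by (simp add: o_def)
qed

lemma moving_int:
  fixes f ft :: "real \<Rightarrow> real \<Rightarrow> real" and l :: "real \<Rightarrow> real"
  assumes dpos: "\<delta> > 0" and Ldef: "L = l t" and Lpos: "L > 0"
    and box: "\<And>x s. x \<in> {-\<delta>..L+\<delta>} \<Longrightarrow> s \<in> {t-\<delta>..t+\<delta>} \<Longrightarrow> ((\<lambda>s. f x s) has_real_derivative ft x s) (at s)"
    and cf: "continuous_on ({-\<delta>..L+\<delta>} \<times> {t-\<delta>..t+\<delta>}) (\<lambda>p. f (fst p) (snd p))"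
    and cft: "continuous_on ({-\<delta>..L+\<delta>} \<times> {t-\<delta>..t+\<delta>}) (\<lambda>p. ft (fst p) (snd p))"
    and ld: "(l has_real_derivative l') (at t within T)"
    and tT: "t \<in> T" and lT: "\<And>s. s \<in> T \<Longrightarrow> l s > 0"
  shows "((\<lambda>s. integral {0..l s} (\<lambda>x. f x s)) has_real_derivative
            (integral {0..L} (\<lambda>x. ft x t) + f L t * l')) (at t within T)"
proof -
  have "continuous (at t within T) l" using ld by (rule DERIV_continuous)
  then obtain d1 where d1: "d1 > 0" "\<And>s. s \<in> T \<Longrightarrow> dist s t < d1 \<Longrightarrow> dist (l s) (l t) < \<delta>"
    unfolding continuous_within_eps_delta using dpos by metis
  define e where "e = min d1 \<delta>"
  have e: "e > 0" "e \<le> \<delta>" "e \<le> d1" using d1 dpos by (auto simp: e_def)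
  define Xs where "Xs = T \<inter> ball t e"
  define Y where "Y = {max 0 (L - \<delta>) <..< L + \<delta>}"
  have tX: "t \<in> Xs" using tT e by (simp add: Xs_def)
  have LY: "L \<in> Y" using Lpos dpos by (simp add: Y_def)
  have XsU: "Xs \<subseteq> {t-\<delta>..t+\<delta>}" using e by (auto simp: Xs_def dist_real_def)
  have YB: "Y \<subseteq> {0..L+\<delta>}" by (auto simp: Y_def)
  have lY: "l s \<in> Y" if "s \<in> Xs" for s
  proof -
    have "s \<in> T" "dist s t < d1" using that e by (auto simp: Xs_def dist_commute)
    then have "dist (l s) L < \<delta>" "l s > 0" using d1 lT Ldef by auto
    then show ?thesis by (auto simp: Y_def dist_real_def)
  qed
  define I where "I = integral {0..L} (\<lambda>x. ft x t)"
  have fx: "((\<lambda>s. integral (cbox 0 L) (\<lambda>x. f x s)) has_field_derivative integral (cbox 0 L) (\<lambda>x. ft x t))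
            (at t within {t-\<delta>..t+\<delta>})"
  proof (rule leibniz_rule_field_derivative[where f="\<lambda>s x. f x s" and fx="\<lambda>s x. ft x s"])
    fix s x assume "s \<in> {t-\<delta>..t+\<delta>}" "x \<in> cbox 0 L"
    then show "((\<lambda>s. f x s) has_field_derivative ft x s) (at s within {t-\<delta>..t+\<delta>})"
      using box dpos by (auto intro: has_field_derivative_at_within)
  next
    fix s assume "s \<in> {t-\<delta>..t+\<delta>}"
    then have "continuous_on {0..L} (\<lambda>x. f x s)"
      by (intro cont_slice[OF cf]) (use dpos in auto)
    then show "(\<lambda>x. f x s) integrable_on cbox 0 L" by (simp add: integrable_continuous_real)
  next
    show "continuous_on ({t-\<delta>..t+\<delta>} \<times> cbox 0 L) (\<lambda>(s, x). ft x s)"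
      using cont_swap[OF cft, of "{t-\<delta>..t+\<delta>}" "cbox 0 L"] dpos by (simp add: case_prod_unfold)
  qed (use dpos in auto)
  then have fx': "((\<lambda>s. integral {0..L} (\<lambda>x. f x s)) has_derivative (*) I) (at t within Xs)"
    unfolding has_field_derivative_def I_def by (simp add: has_derivative_subset[OF _ XsU])
  have fy: "((\<lambda>y. integral {0..y} (\<lambda>x. f x s)) has_derivative blinfun_apply (blinfun_mult_right (f y s))) (at y within Y)"
    if "s \<in> Xs" "y \<in> Y" for s y
  proof -
    have "continuous_on {0..L+\<delta>} (\<lambda>x. f x s)"
      by (intro cont_slice[OF cf]) (use that XsU in auto)
    then have "((\<lambda>u. integral {0..u} (\<lambda>x. f x s)) has_vector_derivative f y s) (at y within {0..L+\<delta>})"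
      by (rule integral_has_vector_derivative) (use that YB in auto)
    then have "((\<lambda>u. integral {0..u} (\<lambda>x. f x s)) has_field_derivative f y s) (at y within Y)"
      by (simp add: has_real_derivative_iff_has_vector_derivative has_vector_derivative_within_subset[OF _ YB])
    then show ?thesis by (simp add: has_field_derivative_eq_has_derivative_blinfun)
  qed
  have fyc: "continuous (at (t, L) within Xs \<times> Y) (\<lambda>(s, y). blinfun_mult_right (f y s))"
  proof -
    have "continuous_on (Xs \<times> Y) (\<lambda>p. f (snd p) (fst p))"
      by (rule cont_swap[OF cf]) (use XsU dpos in \<open>auto simp: Y_def\<close>)
    then have "continuous_on (Xs \<times> Y) (\<lambda>p. blinfun_mult_right (f (snd p) (fst p)))"
      by (intro bounded_linear.continuous_on[OF bounded_linear_blinfun_mult_right])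
    then show ?thesis using tX LY
      by (simp add: case_prod_unfold continuous_on_eq_continuous_within)
  qed
  have P: "((\<lambda>(s, y). integral {0..y} (\<lambda>x. f x s)) has_derivative
           (\<lambda>(hs, hy). I * hs + blinfun_apply (blinfun_mult_right (f L t)) hy)) (at (t, L) within Xs \<times> Y)"
    by (rule has_derivative_partialsI[OF fx' fy fyc LY]) (auto simp: Y_def)
  have g: "((\<lambda>s. (s, l s)) has_derivative (\<lambda>h. (h, l' * h))) (at t within Xs)"
    using ld unfolding has_field_derivative_def
    by (intro has_derivative_Pair has_derivative_ident) (auto intro: has_derivative_subset simp: Xs_def)
  have P': "((\<lambda>(s, y). integral {0..y} (\<lambda>x. f x s)) has_derivative
           (\<lambda>(hs, hy). I * hs + blinfun_apply (blinfun_mult_right (f L t)) hy)) (at (t, l t) within (\<lambda>s. (s, l s)) ` Xs)"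
  proof -
    have "(\<lambda>s. (s, l s)) ` Xs \<subseteq> Xs \<times> Y" using lY by auto
    then show ?thesis using has_derivative_subset[OF P] Ldef by simp
  qed
  have CH: "(((\<lambda>(s, y). integral {0..y} (\<lambda>x. f x s)) \<circ> (\<lambda>s. (s, l s))) has_derivative
         ((\<lambda>(hs, hy). I * hs + blinfun_apply (blinfun_mult_right (f L t)) hy) \<circ> (\<lambda>h. (h, l' * h)))) (at t within Xs)"
    by (rule diff_chain_within[OF g]) (use P' in simp)
  then have "((\<lambda>s. integral {0..l s} (\<lambda>x. f x s)) has_real_derivative (I + f L t * l')) (at t within Xs)"
  proof -
    have e1: "((\<lambda>(s, y). integral {0..y} (\<lambda>x. f x s)) \<circ> (\<lambda>s. (s, l s))) = (\<lambda>s. integral {0..l s} (\<lambda>x. f x s))"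
      by (simp add: fun_eq_iff)
    have e2: "((\<lambda>(hs, hy). I * hs + blinfun_apply (blinfun_mult_right (f L t)) hy) \<circ> (\<lambda>h. (h, l' * h))) = (*) (I + f L t * l')"
      by (simp add: o_def algebra_simps fun_eq_iff)
    show ?thesis using CH unfolding e1 e2 has_field_derivative_def .
  qed
  moreover have "at t within Xs = at t within T"
    unfolding Xs_def by (rule at_within_nhd[of _ "ball t e"]) (use e in auto)
  ultimately show ?thesis by (simp add: I_def)
qed

lemma inner_transpose: "x \<bullet> (transpose A *v y) = (A *v x) \<bullet> (y::real^'n)"
  using dot_lmul_matrix[of x "transpose A" y] by simp

lemma quad_scale: "(c *\<^sub>R x) \<bullet> (Q *v (c *\<^sub>R x)) = c\<^sup>2 * (x \<bullet> (Q *v (x::real^'n)))"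
  by (simp add: matrix_vector_mult_scaleR power2_eq_square)

lemma quad_lower:
  fixes Q :: "real^'n^'n"
  assumes "pos_def Q"
  shows "\<exists>q>0. \<forall>x. q * (norm x)\<^sup>2 \<le> x \<bullet> (Q *v x)"
proof -
  have pd: "x \<noteq> 0 \<Longrightarrow> x \<bullet> (Q *v x) > 0" for x using assms by (auto simp: pos_def_def)
  have cs: "compact (sphere (0::real^'n) 1)" by simp
  have ne: "sphere (0::real^'n) 1 \<noteq> {}" by simp
  have co: "continuous_on (sphere 0 1) (\<lambda>x::real^'n. x \<bullet> (Q *v x))"
    by (intro continuous_intros linear_continuous_on) auto
  obtain u where u: "u \<in> sphere 0 1" "\<And>y. y \<in> sphere 0 1 \<Longrightarrow> u \<bullet> (Q *v u) \<le> y \<bullet> (Q *v y)"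
    using continuous_attains_inf[OF cs ne co] by blast
  define q where "q = u \<bullet> (Q *v u)"
  have "u \<noteq> 0" using u(1) by auto
  then have q: "q > 0" using pd q_def by auto
  have "q * (norm x)\<^sup>2 \<le> x \<bullet> (Q *v x)" for x
  proof (cases "x = 0")
    case True then show ?thesis by simp
  next
    case False
    define y where "y = (1 / norm x) *\<^sub>R x"
    have "y \<in> sphere 0 1" using False by (simp add: y_def)
    then have "q \<le> y \<bullet> (Q *v y)" using u q_def by auto
    also have "\<dots> = (1 / norm x)\<^sup>2 * (x \<bullet> (Q *v x))" unfolding y_def by (rule quad_scale)
    finally have "q * (norm x)\<^sup>2 \<le> (1 / norm x)\<^sup>2 * (x \<bullet> (Q *v x)) * (norm x)\<^sup>2"
      by (intro mult_right_mono) auto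
    also have "\<dots> = x \<bullet> (Q *v x)" using False by (simp add: field_simps)
    finally show ?thesis .
  qed
  then show ?thesis using q by blast
qed

lemma quad_upper:
  fixes P :: "real^'n^'n"
  shows "\<exists>p>0. \<forall>x. x \<bullet> (P *v x) \<le> p * (norm x)\<^sup>2"
proof -
  obtain K where K: "K > 0" "\<And>x. norm (P *v x) \<le> norm x * K"
    using bounded_linear.pos_bounded[OF matrix_vector_mul_bounded_linear[of P]] by blast
  have "x \<bullet> (P *v x) \<le> K * (norm x)\<^sup>2" for x
  proof -
    have "x \<bullet> (P *v x) \<le> norm x * norm (P *v x)" by (rule norm_cauchy_schwarz)
    also have "\<dots> \<le> norm x * (norm x * K)" by (intro mult_left_mono K) auto
    finally show ?thesis by (simp add: power2_eq_square mult_ac)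
  qed
  then show ?thesis using K by blast
qed

lemma lyap_quad:
  fixes P Q M :: "real^'n^'n"
  assumes "transpose M ** P + P ** M = - Q" "transpose P = P"
  shows "2 * (x \<bullet> (P *v (M *v x))) = - (x \<bullet> (Q *v x))"
proof -
  have "x \<bullet> (Q *v x) = - (x \<bullet> ((transpose M ** P + P ** M) *v x))"
  proof -
    have "(- Q) *v x = - (Q *v x)" by (simp add: vec_eq_iff matrix_vector_mult_def sum_negf)
    then show ?thesis using assms(1) by simp
  qed
  also have "\<dots> = - (x \<bullet> (transpose M *v (P *v x)) + x \<bullet> (P *v (M *v x)))"
    by (simp add: matrix_vector_mult_add_rdistrib matrix_vector_mul_assoc inner_add_right)
  also have "x \<bullet> (transpose M *v (P *v x)) = (M *v x) \<bullet> (P *v x)" by (rule inner_transpose)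
  also have "\<dots> = (M *v x) \<bullet> (transpose P *v x)" using assms(2) by simp
  also have "\<dots> = x \<bullet> (P *v (M *v x))" by (metis inner_transpose inner_commute)
  finally show ?thesis by simp
qed

lemma deriv_quad:
  fixes P :: "real^'n^'n"
  assumes "(X has_vector_derivative Xd) (at t within S)" "transpose P = P"
  shows "((\<lambda>s. X s \<bullet> (P *v X s)) has_real_derivative 2 * (X t \<bullet> (P *v Xd))) (at t within S)"
proof -
  have XD: "(X has_derivative (\<lambda>h. h *\<^sub>R Xd)) (at t within S)"
    using assms(1) by (simp add: has_vector_derivative_def)
  have PX: "((\<lambda>s. P *v X s) has_derivative (\<lambda>h. P *v (h *\<^sub>R Xd))) (at t within S)"
    by (rule bounded_linear.has_derivative[OF matrix_vector_mul_bounded_linear XD])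
  have "((\<lambda>s. X s \<bullet> (P *v X s)) has_derivative
         (\<lambda>h. X t \<bullet> (P *v (h *\<^sub>R Xd)) + (h *\<^sub>R Xd) \<bullet> (P *v X t))) (at t within S)"
    by (rule has_derivative_inner[OF XD PX])
  moreover have "(\<lambda>h. X t \<bullet> (P *v (h *\<^sub>R Xd)) + (h *\<^sub>R Xd) \<bullet> (P *v X t)) = (*) (2 * (X t \<bullet> (P *v Xd)))"
  proof
    fix h
    have "Xd \<bullet> (P *v X t) = X t \<bullet> (P *v Xd)"
      using inner_transpose[of Xd P "X t"] assms(2) by (simp add: inner_commute)
    then show "X t \<bullet> (P *v (h *\<^sub>R Xd)) + (h *\<^sub>R Xd) \<bullet> (P *v X t) = 2 * (X t \<bullet> (P *v Xd)) * h"
      by (simp add: matrix_vector_mult_scaleR)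
  qed
  ultimately show ?thesis by (simp add: has_field_derivative_def)
qed

lemma young2: fixes p q wl n :: real assumes "q > 0"
  shows "2 * p * \<bar>wl\<bar> * n \<le> 2 * p\<^sup>2 / q * wl\<^sup>2 + q / 2 * n\<^sup>2"
proof -
  have "0 \<le> (2 * p * \<bar>wl\<bar> - q * n)\<^sup>2 / (2 * q)" using assms by simp
  also have "\<dots> = 2 * p\<^sup>2 / q * wl\<^sup>2 + q / 2 * n\<^sup>2 - 2 * p * \<bar>wl\<bar> * n"
    using assms by (simp add: field_simps power2_eq_square)
  finally show ?thesis by simp
qed

lemma final_ineq:
  fixes D g gam a K0 d1 d2 W1 W2 W3 nX x2 Vp w0 A1 A2 v wl qX pbX q pb cF L lbar vb rg :: real
  assumes D: "D > 0" and g: "g > 0" and gam: "gam > 0" and aD: "a \<le> D * gam"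
    and K0: "K0 = (\<bar>a\<bar> + vb) / 2 + 2 * pb\<^sup>2 / q + 1"
    and d1a: "d1 \<ge> 4 * K0\<^sup>2 / D\<^sup>2" and d1b: "d1 \<ge> (\<bar>a\<bar> + 2 * K0) * gam / D" and d1p: "d1 > 0"
    and W: "W1 \<ge> 0" "W2 \<ge> 0" "W3 \<ge> 0" and nX: "nX \<ge> 0" and x2: "x2 = nX\<^sup>2"
    and Vp: "Vp = - d1 * D * gam * w0\<^sup>2 - d1 * D * W2 + d1 * a * w0\<^sup>2 / 2 - d1 * g * W1 - d1 * A1
                - v * wl\<^sup>2 / 2 - D * W3 + a * wl\<^sup>2 / 2 - a * gam\<^sup>2 * w0\<^sup>2 / 2 - g * gam * w0\<^sup>2 - g * W2
                + A2 + d2 * (- qX + 2 * wl * pbX)"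
    and qX: "qX \<ge> q * x2" and q: "q > 0" and pbX: "\<bar>pbX\<bar> \<le> pb * nX"
    and A1: "- A1 \<le> \<bar>v\<bar> * cF * (L * x2 + W1) / 2"
    and A2: "A2 \<le> D / 4 * W3 + L * v\<^sup>2 * cF\<^sup>2 * x2 / D"
    and vb: "\<bar>v\<bar> \<le> vb" and vr: "\<bar>v\<bar> \<le> rg * nX"
    and wl: "wl\<^sup>2 \<le> gam\<^sup>2 * w0\<^sup>2 + W2 / (D / (4 * K0)) + (D / (4 * K0)) * W3"
    and d2: "0 < d2" "d2 \<le> 1" and L: "0 \<le> L" "L \<le> lbar" and cF: "cF \<ge> 0" and rg: "rg > 0"
  shows "Vp \<le> - d1 * g * W1 - g * W2 - g * gam * w0\<^sup>2 - d2 * q / 2 * x2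
              + (d1 * rg * cF * (lbar + 1) / 2 + lbar * vb * rg * cF\<^sup>2 / D) * (nX * (x2 + W1))"
proof -
  have x2n: "x2 \<ge> 0" using x2 by simp
  have vb0: "vb \<ge> 0" using vb by linarith
  have K0p: "K0 > 0"
  proof -
    have "2 * pb\<^sup>2 / q \<ge> 0" using q by simp
    moreover have "(\<bar>a\<bar> + vb) / 2 \<ge> 0" using vb0 by simp
    ultimately show ?thesis unfolding K0 by linarith
  qed
  have h1: "- d1 * A1 \<le> d1 * rg * cF * (lbar + 1) / 2 * (nX * (x2 + W1))"
  proof -
    have "d1 * (- A1) \<le> d1 * (\<bar>v\<bar> * cF * (L * x2 + W1) / 2)" using A1 d1p
      by (intro mult_left_mono) auto
    then have "- d1 * A1 \<le> d1 * (\<bar>v\<bar> * cF * (L * x2 + W1) / 2)" by simp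
    also have "\<bar>v\<bar> * cF * (L * x2 + W1) / 2 \<le> (rg * nX) * cF * ((lbar + 1) * (x2 + W1)) / 2"
    proof -
      have "L * x2 + W1 \<le> (lbar + 1) * (x2 + W1)"
      proof -
        have "L * x2 \<le> lbar * x2" using L x2n by (intro mult_right_mono) auto
        moreover have "0 \<le> lbar * W1" using L W by simp
        ultimately show ?thesis using x2n unfolding distrib_left distrib_right by linarith
      qed
      note f1 = this
      have f2: "0 \<le> L * x2 + W1" using L x2n W by simp
      have f3: "\<bar>v\<bar> * cF \<le> (rg * nX) * cF" by (rule mult_right_mono[OF vr cF])
      have f4: "0 \<le> (rg * nX) * cF" using rg nX cF by simp
      have "(\<bar>v\<bar> * cF) * (L * x2 + W1) \<le> ((rg * nX) * cF) * ((lbar + 1) * (x2 + W1))"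
        by (rule mult_mono[OF f3 f1 f4 f2])
      then show ?thesis by (intro divide_right_mono) auto
    qed
    then have "d1 * (\<bar>v\<bar> * cF * (L * x2 + W1) / 2) \<le> d1 * ((rg * nX) * cF * ((lbar + 1) * (x2 + W1)) / 2)"
      using d1p by (intro mult_left_mono) auto
    finally show ?thesis by (simp add: algebra_simps)
  qed
  have h2: "A2 \<le> D / 4 * W3 + lbar * vb * rg * cF\<^sup>2 / D * (nX * x2)"
  proof -
    have "v\<^sup>2 \<le> vb * (rg * nX)"
      unfolding power2_eq_square using vb vr by (metis abs_ge_zero abs_mult_self_eq mult_mono vb0)
    then have "L * v\<^sup>2 * cF\<^sup>2 * x2 / D \<le> lbar * (vb * (rg * nX)) * cF\<^sup>2 * x2 / D"
      using L D x2n by (intro divide_right_mono mult_right_mono mult_mono) auto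
    then show ?thesis using A2 by (simp add: algebra_simps)
  qed
  have h3: "- v * wl\<^sup>2 / 2 + a * wl\<^sup>2 / 2 + d2 * (2 * wl * pbX) \<le> K0 * wl\<^sup>2 + d2 * q / 2 * x2"
  proof -
    have e1: "- v * wl\<^sup>2 / 2 + a * wl\<^sup>2 / 2 \<le> (\<bar>a\<bar> + vb) / 2 * wl\<^sup>2"
    proof -
      have "(a - v) \<le> \<bar>a\<bar> + vb" using vb by linarith
      then have "(a - v) * wl\<^sup>2 \<le> (\<bar>a\<bar> + vb) * wl\<^sup>2" by (intro mult_right_mono) auto
      then show ?thesis by (simp add: algebra_simps)
    qed
    have "2 * wl * pbX \<le> 2 * pb * \<bar>wl\<bar> * nX"
    proof -
      have "2 * wl * pbX \<le> 2 * \<bar>wl\<bar> * \<bar>pbX\<bar>" by (simp add: abs_mult[symmetric] mult.assoc)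
      also have "\<dots> \<le> 2 * \<bar>wl\<bar> * (pb * nX)" using pbX by (intro mult_left_mono) auto
      finally show ?thesis by (simp add: mult_ac)
    qed
    also have "\<dots> \<le> 2 * pb\<^sup>2 / q * wl\<^sup>2 + q / 2 * nX\<^sup>2" by (rule young2[OF q])
    finally have "d2 * (2 * wl * pbX) \<le> d2 * (2 * pb\<^sup>2 / q * wl\<^sup>2 + q / 2 * nX\<^sup>2)"
      using d2 by (intro mult_left_mono) auto
    also have "\<dots> = d2 * (2 * pb\<^sup>2 / q * wl\<^sup>2) + d2 * q / 2 * x2" by (simp add: x2 algebra_simps)
    also have "d2 * (2 * pb\<^sup>2 / q * wl\<^sup>2) \<le> 1 * (2 * pb\<^sup>2 / q * wl\<^sup>2)"
      using d2 q by (intro mult_right_mono) auto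
    finally have "d2 * (2 * wl * pbX) \<le> 2 * pb\<^sup>2 / q * wl\<^sup>2 + d2 * q / 2 * x2" by simp
    moreover have "K0 * wl\<^sup>2 = (\<bar>a\<bar> + vb) / 2 * wl\<^sup>2 + 2 * pb\<^sup>2 / q * wl\<^sup>2 + wl\<^sup>2"
      unfolding K0 by (simp add: algebra_simps)
    ultimately show ?thesis using e1 zero_le_power2[of wl] by linarith
  qed
  have h4: "K0 * wl\<^sup>2 \<le> K0 * gam\<^sup>2 * w0\<^sup>2 + 4 * K0\<^sup>2 / D * W2 + D / 4 * W3"
  proof -
    have "K0 * wl\<^sup>2 \<le> K0 * (gam\<^sup>2 * w0\<^sup>2 + W2 / (D / (4 * K0)) + (D / (4 * K0)) * W3)"
      using wl K0p by (intro mult_left_mono) auto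
    also have "\<dots> = K0 * gam\<^sup>2 * w0\<^sup>2 + 4 * K0\<^sup>2 / D * W2 + D / 4 * W3"
      using K0p D by (simp add: field_simps power2_eq_square)
    finally show ?thesis .
  qed
  have h5: "- d2 * qX \<le> - d2 * q * x2" using qX d2 by (simp add: mult_left_mono)
  have c2: "4 * K0\<^sup>2 / D * W2 \<le> d1 * D * W2"
  proof -
    have "4 * K0\<^sup>2 / D = (4 * K0\<^sup>2 / D\<^sup>2) * D" using D by (simp add: field_simps power2_eq_square)
    also have "\<dots> \<le> d1 * D" using d1a D by (intro mult_right_mono) auto
    finally show ?thesis using W by (intro mult_right_mono) auto
  qed
  have c0: "K0 * gam\<^sup>2 * w0\<^sup>2 - a * gam\<^sup>2 * w0\<^sup>2 / 2 + d1 * a * w0\<^sup>2 / 2 \<le> d1 * D * gam * w0\<^sup>2"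
  proof -
    have "(\<bar>a\<bar> + 2 * K0) * gam / D * (D * gam) \<le> d1 * (D * gam)"
      using d1b D gam by (intro mult_right_mono) auto
    moreover have "(\<bar>a\<bar> + 2 * K0) * gam / D * (D * gam) = (\<bar>a\<bar> + 2 * K0) * gam\<^sup>2"
      using D by (simp add: field_simps power2_eq_square)
    ultimately have "(\<bar>a\<bar> + 2 * K0) * gam\<^sup>2 \<le> d1 * D * gam" by (simp add: mult.assoc)
    moreover have "d1 * a \<le> d1 * (D * gam)" using aD d1p by (intro mult_left_mono) auto
    ultimately have "K0 * gam\<^sup>2 - a * gam\<^sup>2 / 2 + d1 * a / 2 \<le> d1 * D * gam"
    proof -
      have "- a * gam\<^sup>2 \<le> \<bar>a\<bar> * gam\<^sup>2" by (intro mult_right_mono) auto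
      moreover have "(\<bar>a\<bar> + 2 * K0) * gam\<^sup>2 = \<bar>a\<bar> * gam\<^sup>2 + 2 * (K0 * gam\<^sup>2)" by (simp add: algebra_simps)
      ultimately show ?thesis using \<open>(\<bar>a\<bar> + 2 * K0) * gam\<^sup>2 \<le> d1 * D * gam\<close> \<open>d1 * a \<le> d1 * (D * gam)\<close>
        by (simp add: mult.assoc)
    qed
    then have "(K0 * gam\<^sup>2 - a * gam\<^sup>2 / 2 + d1 * a / 2) * w0\<^sup>2 \<le> (d1 * D * gam) * w0\<^sup>2"
      by (intro mult_right_mono) auto
    then show ?thesis by (simp add: algebra_simps)
  qed
  have "Vp \<le> - d1 * D * gam * w0\<^sup>2 - d1 * D * W2 + d1 * a * w0\<^sup>2 / 2 - d1 * g * W1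
                + d1 * rg * cF * (lbar + 1) / 2 * (nX * (x2 + W1))
                - D * W3 + K0 * gam\<^sup>2 * w0\<^sup>2 + 4 * K0\<^sup>2 / D * W2 + D / 4 * W3 + d2 * q / 2 * x2
                - a * gam\<^sup>2 * w0\<^sup>2 / 2 - g * gam * w0\<^sup>2 - g * W2
                + D / 4 * W3 + lbar * vb * rg * cF\<^sup>2 / D * (nX * x2) - d2 * q * x2"
  proof -
    have "d2 * (- qX + 2 * wl * pbX) = - d2 * qX + d2 * (2 * wl * pbX)" by (simp add: algebra_simps)
    then show ?thesis unfolding Vp using h1 h2 h3 h4 h5 by linarith
  qed
  also have "\<dots> \<le> - d1 * g * W1 - g * W2 - g * gam * w0\<^sup>2 - d2 * q / 2 * x2
              + (d1 * rg * cF * (lbar + 1) / 2 + lbar * vb * rg * cF\<^sup>2 / D) * (nX * (x2 + W1))"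
  proof -
    have "lbar * vb * rg * cF\<^sup>2 / D * (nX * x2) \<le> lbar * vb * rg * cF\<^sup>2 / D * (nX * (x2 + W1))"
    proof (rule mult_left_mono)
      show "nX * x2 \<le> nX * (x2 + W1)" using nX W by (intro mult_left_mono) auto
      show "0 \<le> lbar * vb * rg * cF\<^sup>2 / D" using L vb0 rg D by auto
    qed
    moreover have "0 \<le> D / 4 * W3" using D W by simp
    moreover have "d1 * rg * cF * (lbar + 1) / 2 * (nX * (x2 + W1)) + lbar * vb * rg * cF\<^sup>2 / D * (nX * (x2 + W1))
       = (d1 * rg * cF * (lbar + 1) / 2 + lbar * vb * rg * cF\<^sup>2 / D) * (nX * (x2 + W1))"
      by (simp add: algebra_simps)
    moreover have "d2 * q / 2 * x2 - d2 * q * x2 = - (d2 * q / 2 * x2)" by simp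
    ultimately show ?thesis using c0 c2 by linarith
  qed
  finally show ?thesis .
qed

lemma powr_three_halves: "(V::real) \<ge> 0 \<Longrightarrow> V powr (3/2) = V * sqrt V"
proof (cases "V = 0")
  case False
  assume "V \<ge> 0"
  then have "V > 0" using False by simp
  then have "V powr (3/2) = V powr (1 + 1/2)" by simp
  also have "\<dots> = V powr 1 * V powr (1/2)" by (rule powr_add)
  also have "\<dots> = V * sqrt V" using \<open>V > 0\<close> by (simp add: powr_half_sqrt)
  finally show ?thesis .
qed simp

lemma to_powr:
  fixes Vp V W1 W2 w0 x2 nX XPX d1 d2 g gam q pm pM C3 alpha alpha0 D :: real
  assumes Vp: "Vp \<le> - d1 * g * W1 - g * W2 - g * gam * w0\<^sup>2 - d2 * q / 2 * x2 + C3 * (nX * (x2 + W1))"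
    and V: "V = d1 / 2 * W1 + 1 / 2 * W2 + gam / 2 * w0\<^sup>2 + d2 * XPX"
    and PM: "XPX \<le> pM * x2" and Pm: "pm * x2 \<le> XPX" and pm: "pm > 0"
    and W: "W1 \<ge> 0" "W2 \<ge> 0" and nX: "nX \<ge> 0" and x2: "x2 = nX\<^sup>2" and C3: "C3 \<ge> 0"
    and al: "alpha \<le> alpha0" and a0p: "alpha0 \<ge> 0" and a01: "alpha0 \<le> 2 * g" and a02: "alpha0 * pM \<le> q / 2"
    and d1: "d1 > 0" and d2: "d2 > 0" and g: "g > 0" and gam: "gam > 0"
  shows "Vp \<le> - alpha * V + (C3 / sqrt (d2 * pm) * (1 / (d2 * pm) + 2 / d1)) * V powr (3/2)"
proof -
  have x2n: "x2 \<ge> 0" using x2 by simp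
  have XPXn: "XPX \<ge> 0" using Pm pm x2n by (smt (verit) mult_nonneg_nonneg)
  have Vn: "V \<ge> 0" unfolding V using W d1 d2 gam XPXn by (intro add_nonneg_nonneg mult_nonneg_nonneg) auto
  have P1: "- d1 * g * W1 - g * W2 - g * gam * w0\<^sup>2 - d2 * q / 2 * x2 \<le> - alpha0 * V"
  proof -
    have t1: "alpha0 * (d1 / 2 * W1) \<le> d1 * g * W1"
    proof -
      have "alpha0 * (d1 / 2 * W1) = (alpha0 / 2) * (d1 * W1)" by simp
      also have "\<dots> \<le> g * (d1 * W1)" using a01 d1 W by (intro mult_right_mono) auto
      finally show ?thesis by (simp add: mult_ac)
    qed
    have t2: "alpha0 * (1 / 2 * W2) \<le> g * W2"
    proof -
      have "alpha0 * (1 / 2 * W2) = (alpha0 / 2) * W2" by simp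
      also have "\<dots> \<le> g * W2" using a01 W by (intro mult_right_mono) auto
      finally show ?thesis .
    qed
    have t3: "alpha0 * (gam / 2 * w0\<^sup>2) \<le> g * gam * w0\<^sup>2"
    proof -
      have "alpha0 * (gam / 2 * w0\<^sup>2) = (alpha0 / 2) * (gam * w0\<^sup>2)" by simp
      also have "\<dots> \<le> g * (gam * w0\<^sup>2)" using a01 gam by (intro mult_right_mono) auto
      finally show ?thesis by (simp add: mult_ac)
    qed
    have t4: "alpha0 * (d2 * XPX) \<le> d2 * q / 2 * x2"
    proof -
      have "alpha0 * XPX \<le> alpha0 * (pM * x2)" using PM a0p by (rule mult_left_mono)
      also have "\<dots> = (alpha0 * pM) * x2" by simp
      also have "\<dots> \<le> q / 2 * x2" using a02 x2n by (rule mult_right_mono)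
      finally have "d2 * (alpha0 * XPX) \<le> d2 * (q / 2 * x2)" using d2 by (intro mult_left_mono) auto
      then show ?thesis by (simp add: mult_ac)
    qed
    have "alpha0 * V = alpha0 * (d1 / 2 * W1) + alpha0 * (1 / 2 * W2) + alpha0 * (gam / 2 * w0\<^sup>2) + alpha0 * (d2 * XPX)"
      unfolding V by (simp add: distrib_left)
    then show ?thesis using t1 t2 t3 t4 by linarith
  qed
  have P2: "- alpha0 * V \<le> - alpha * V" using al Vn by (simp add: mult_right_mono)
  have P3: "C3 * (nX * (x2 + W1)) \<le> (C3 / sqrt (d2 * pm) * (1 / (d2 * pm) + 2 / d1)) * V powr (3/2)"
  proof -
    have dp: "d2 * pm > 0" using d2 pm by simp
    have hx: "x2 \<le> V / (d2 * pm)"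
    proof -
      have "d2 * (pm * x2) \<le> d2 * XPX" using Pm d2 by (intro mult_left_mono) auto
      also have "d2 * XPX \<le> V" unfolding V using W d1 gam by (smt (verit) divide_nonneg_pos mult_nonneg_nonneg zero_le_power2)
      finally show ?thesis using dp by (simp add: field_simps)
    qed
    have hw: "W1 \<le> 2 * V / d1"
    proof -
      have "d1 / 2 * W1 \<le> V" unfolding V using W d2 gam XPXn
        by (smt (verit) divide_nonneg_pos mult_nonneg_nonneg zero_le_power2)
      then show ?thesis using d1 by (simp add: field_simps)
    qed
    have hn: "nX \<le> sqrt V / sqrt (d2 * pm)"
    proof -
      have "nX = sqrt x2" using x2 nX by simp
      also have "\<dots> \<le> sqrt (V / (d2 * pm))" using hx by (rule real_sqrt_le_mono)
      also have "\<dots> = sqrt V / sqrt (d2 * pm)" by (simp add: real_sqrt_divide)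
      finally show ?thesis .
    qed
    have "nX * (x2 + W1) \<le> (sqrt V / sqrt (d2 * pm)) * (V / (d2 * pm) + 2 * V / d1)"
      using hn hx hw nX x2n W by (intro mult_mono add_mono) auto
    also have "\<dots> = (1 / sqrt (d2 * pm) * (1 / (d2 * pm) + 2 / d1)) * (V * sqrt V)"
      by (simp add: field_simps)
    also have "\<dots> = (1 / sqrt (d2 * pm) * (1 / (d2 * pm) + 2 / d1)) * V powr (3/2)"
      using Vn by (simp add: powr_three_halves)
    finally have "C3 * (nX * (x2 + W1)) \<le> C3 * ((1 / sqrt (d2 * pm) * (1 / (d2 * pm) + 2 / d1)) * V powr (3/2))"
      using C3 by (intro mult_left_mono) auto
    then show ?thesis by simp
  qed
  show ?thesis using Vp P1 P2 P3 by linarith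
qed

locale sys =
  fixes D a g rg atil beta gam ls lc cinf :: real
    and K :: "real^2" and P Q :: "real^2^2"
    and X :: "real \<Rightarrow> real^2" and l :: "real \<Rightarrow> real"
    and w wx wt wxx wxt :: "real \<Rightarrow> real \<Rightarrow> real"
    and U :: "(real \<times> real) set"
  assumes D_pos: "D > 0" and gam_pos: "gam > 0"
    and P_sym: "transpose P = P"
    and lyap: "transpose (Amat atil rg + outer (Bvec beta) K) ** P + P ** (Amat atil rg + outer (Bvec beta) K) = - Q"
    and l_def: "\<forall>t. l t = ls + X t $ 2"
    and U_open: "open U"
    and U_dom: "{(x, t). 0 \<le> t \<and> 0 \<le> x \<and> x \<le> l t} \<subseteq> U"
    and w_deriv: "\<forall>p\<in>U. ((\<lambda>q. w (fst q) (snd q)) has_derivative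
                      (\<lambda>h. wx (fst p) (snd p) * fst h + wt (fst p) (snd p) * snd h)) (at p)"
    and wx_deriv: "\<forall>p\<in>U. ((\<lambda>q. wx (fst q) (snd q)) has_derivative
                      (\<lambda>h. wxx (fst p) (snd p) * fst h + wxt (fst p) (snd p) * snd h)) (at p)"
    and wt_cont: "continuous_on U (\<lambda>q. wt (fst q) (snd q))"
    and wxx_cont: "continuous_on U (\<lambda>q. wxx (fst q) (snd q))"
    and wxt_cont: "continuous_on U (\<lambda>q. wxt (fst q) (snd q))"
    and bc0: "\<forall>t\<ge>0. wx 0 t = gam * w 0 t"
    and bcl: "\<forall>t\<ge>0. w (l t) t = 0"
    and ode: "\<forall>t\<ge>0. (X has_vector_derivative
                ((Amat atil rg + outer (Bvec beta) K) *v X t + wx (l t) t *\<^sub>R Bvec beta)) (at t within {0..})"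
    and l_pos: "\<forall>t\<ge>0. 0 < l t"
begin

abbreviation "Mm \<equiv> Amat atil rg + outer (Bvec beta) K"
abbreviation "Bb \<equiv> Bvec beta"

lemma Xd2: "(Mm *v x + c *\<^sub>R Bb) $ 2 = rg * x $ 1"
  by (simp add: Amat_def outer_def Bvec_def matrix_vector_mult_def sum_2)

lemma l_deriv:
  assumes "t \<ge> 0"
  shows "(l has_real_derivative (rg * X t $ 1)) (at t within {0..})"
proof -
  have lf: "l = (\<lambda>s. ls + X s $ 2)" using l_def by auto
  have "(X has_derivative (\<lambda>h. h *\<^sub>R (Mm *v X t + wx (l t) t *\<^sub>R Bb))) (at t within {0..})"
    using ode assms by (simp add: has_vector_derivative_def)
  then have "((\<lambda>s. X s $ 2) has_derivative (\<lambda>h. (h *\<^sub>R (Mm *v X t + wx (l t) t *\<^sub>R Bb)) $ 2)) (at t within {0..})"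
    by (rule bounded_linear.has_derivative[OF bounded_linear_vec_nth])
  then have "((\<lambda>s. X s $ 2) has_real_derivative (rg * X t $ 1)) (at t within {0..})"
  proof -
    have e: "(\<lambda>h. (h *\<^sub>R (Mm *v X t + wx (l t) t *\<^sub>R Bb)) $ 2) = (*) (rg * X t $ 1)"
      by (simp add: fun_eq_iff Amat_def outer_def Bvec_def matrix_vector_mult_def sum_2 mult.commute)
    show ?thesis using \<open>((\<lambda>s. X s $ 2) has_derivative _) _\<close> unfolding has_field_derivative_def e .
  qed
  then show ?thesis unfolding lf by (auto intro!: derivative_eq_intros)
qed

lemma box_ex:
  assumes "t \<ge> 0"
  shows "\<exists>\<delta>>0. \<forall>x s. x \<in> {-\<delta>..l t+\<delta>} \<longrightarrow> s \<in> {t-\<delta>..t+\<delta>} \<longrightarrow> (x, s) \<in> U"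
proof -
  have A: "{0..l t} \<times> {t} \<subseteq> U" using U_dom assms by auto
  obtain e where e: "e > 0" "(\<Union>x\<in>{0..l t} \<times> {t}. ball x e) \<subseteq> U"
    using compact_subset_open_imp_ball_epsilon_subset[OF compact_Times[OF compact_Icc compact_sing] U_open A]
    by blast
  have lp: "l t > 0" using l_pos assms by auto
  have "(x, s) \<in> U" if "x \<in> {-(e/3)..l t+e/3}" "s \<in> {t-e/3..t+e/3}" for x s
  proof -
    define x' where "x' = max 0 (min (l t) x)"
    have x': "x' \<in> {0..l t}" using lp by (auto simp: x'_def)
    have "dist (x', t) (x, s) = norm (x' - x, t - s)" by (simp add: dist_norm)
    also have "\<dots> \<le> norm (x' - x) + norm (t - s)" by (rule norm_Pair_le)
    also have "\<dots> < e" using that e lp by (auto simp: x'_def)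
    finally have "(x, s) \<in> ball (x', t) e" by simp
    then show ?thesis using e x' by blast
  qed
  then show ?thesis using e by (intro exI[of _ "e/3"]) auto
qed

lemma partials:
  fixes f fx ft :: "real \<Rightarrow> real \<Rightarrow> real"
  assumes A: "((\<lambda>q. f (fst q) (snd q)) has_derivative (\<lambda>h. fx x s * fst h + ft x s * snd h)) (at (x, s))"
  shows "((\<lambda>x. f x s) has_real_derivative fx x s) (at x)"
    and "((\<lambda>s. f x s) has_real_derivative ft x s) (at s)"
proof -
  have "((\<lambda>y. (y, s)) has_derivative (\<lambda>h. (h, 0))) (at x)"
    by (auto intro!: derivative_eq_intros)
  then have D: "(((\<lambda>q. f (fst q) (snd q)) \<circ> (\<lambda>y. (y, s))) has_derivative ((\<lambda>h. fx x s * fst h + ft x s * snd h) \<circ> (\<lambda>h. (h, 0)))) (at x)"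
    by (rule diff_chain_at) (use A in simp)
  have e1: "((\<lambda>q. f (fst q) (snd q)) \<circ> (\<lambda>y. (y, s))) = (\<lambda>y. f y s)" by (simp add: fun_eq_iff)
  have e2: "((\<lambda>h. fx x s * fst h + ft x s * snd h) \<circ> (\<lambda>h. (h, 0))) = (*) (fx x s)" by (simp add: fun_eq_iff)
  from D show "((\<lambda>x. f x s) has_real_derivative fx x s) (at x)" unfolding e1 e2 has_field_derivative_def .
  have "((\<lambda>y. (x, y)) has_derivative (\<lambda>h. (0, h))) (at s)"
    by (auto intro!: derivative_eq_intros)
  then have D2: "(((\<lambda>q. f (fst q) (snd q)) \<circ> (\<lambda>y. (x, y))) has_derivative ((\<lambda>h. fx x s * fst h + ft x s * snd h) \<circ> (\<lambda>h. (0, h)))) (at s)"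
    by (rule diff_chain_at) (use A in simp)
  have e3: "((\<lambda>q. f (fst q) (snd q)) \<circ> (\<lambda>y. (x, y))) = (\<lambda>y. f x y)" by (simp add: fun_eq_iff)
  have e4: "((\<lambda>h. fx x s * fst h + ft x s * snd h) \<circ> (\<lambda>h. (0, h))) = (*) (ft x s)" by (simp add: fun_eq_iff)
  from D2 show "((\<lambda>s. f x s) has_real_derivative ft x s) (at s)" unfolding e3 e4 has_field_derivative_def .
qed

lemma w_x: "(x, s) \<in> U \<Longrightarrow> ((\<lambda>x. w x s) has_real_derivative wx x s) (at x)"
  using partials(1)[where f=w and fx=wx and ft=wt] w_deriv by auto
lemma w_s: "(x, s) \<in> U \<Longrightarrow> ((\<lambda>s. w x s) has_real_derivative wt x s) (at s)"
  using partials(2)[where f=w and fx=wx and ft=wt] w_deriv by auto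
lemma wx_x: "(x, s) \<in> U \<Longrightarrow> ((\<lambda>x. wx x s) has_real_derivative wxx x s) (at x)"
  using partials(1)[where f=wx and fx=wxx and ft=wxt] wx_deriv by auto
lemma wx_s: "(x, s) \<in> U \<Longrightarrow> ((\<lambda>s. wx x s) has_real_derivative wxt x s) (at s)"
  using partials(2)[where f=wx and fx=wxx and ft=wxt] wx_deriv by auto

lemma w_cont: "continuous_on U (\<lambda>q. w (fst q) (snd q))"
  using w_deriv by (intro continuous_at_imp_continuous_on ballI has_derivative_continuous) blast
lemma wx_cont: "continuous_on U (\<lambda>q. wx (fst q) (snd q))"
  using wx_deriv by (intro continuous_at_imp_continuous_on ballI has_derivative_continuous) blast

end

context sys begin

lemma box_U:
  assumes "t \<ge> 0"
  obtains \<delta> where "\<delta> > 0" "{-\<delta>..l t+\<delta>} \<times> {t-\<delta>..t+\<delta>} \<subseteq> U"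
proof -
  obtain \<delta> where d: "\<delta> > 0" "\<forall>x s. x \<in> {-\<delta>..l t+\<delta>} \<longrightarrow> s \<in> {t-\<delta>..t+\<delta>} \<longrightarrow> (x, s) \<in> U"
    using box_ex[OF assms] by blast
  have "{-\<delta>..l t+\<delta>} \<times> {t-\<delta>..t+\<delta>} \<subseteq> U"
  proof
    fix p assume "p \<in> {-\<delta>..l t+\<delta>} \<times> {t-\<delta>..t+\<delta>}"
    then show "p \<in> U" using d(2) by (cases p) blast
  qed
  then show ?thesis using that d(1) by blast
qed

lemma V_deriv:
  assumes t: "t \<ge> 0"
  shows "((\<lambda>s. d1 / 2 * integral {0 .. l s} (\<lambda>x. (w x s)\<^sup>2) + 1 / 2 * integral {0 .. l s} (\<lambda>x. (wx x s)\<^sup>2)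
                + gam / 2 * (w 0 s)\<^sup>2 + d2 * (X s \<bullet> (P *v X s))) has_real_derivative
          (d1 / 2 * integral {0..l t} (\<lambda>x. 2 * w x t * wt x t)
           + 1 / 2 * (integral {0..l t} (\<lambda>x. 2 * wx x t * wxt x t) + (wx (l t) t)\<^sup>2 * (rg * X t $ 1))
           + gam / 2 * (2 * w 0 t * wt 0 t)
           + d2 * (2 * (X t \<bullet> (P *v (Mm *v X t + wx (l t) t *\<^sub>R Bb)))))) (at t within {0..})"
proof -
  obtain \<delta> where d: "\<delta> > 0" and bU: "{-\<delta>..l t+\<delta>} \<times> {t-\<delta>..t+\<delta>} \<subseteq> U" using box_U[OF t] by blast
  define L where "L = l t"
  have Lp: "L > 0" using l_pos t by (simp add: L_def)
  have inU: "(x, s) \<in> U" if "x \<in> {-\<delta>..L+\<delta>}" "s \<in> {t-\<delta>..t+\<delta>}" for x s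
    using bU that by (auto simp: L_def)
  have ld: "(l has_real_derivative (rg * X t $ 1)) (at t within {0..})" by (rule l_deriv[OF t])
  have lT: "\<And>s. s \<in> {0..} \<Longrightarrow> l s > 0" using l_pos by auto
  have cw: "continuous_on ({-\<delta>..L+\<delta>} \<times> {t-\<delta>..t+\<delta>}) (\<lambda>p. w (fst p) (snd p))"
    by (rule continuous_on_subset[OF w_cont]) (use bU in \<open>auto simp: L_def\<close>)
  have cwx: "continuous_on ({-\<delta>..L+\<delta>} \<times> {t-\<delta>..t+\<delta>}) (\<lambda>p. wx (fst p) (snd p))"
    by (rule continuous_on_subset[OF wx_cont]) (use bU in \<open>auto simp: L_def\<close>)
  have cwt: "continuous_on ({-\<delta>..L+\<delta>} \<times> {t-\<delta>..t+\<delta>}) (\<lambda>p. wt (fst p) (snd p))"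
    by (rule continuous_on_subset[OF wt_cont]) (use bU in \<open>auto simp: L_def\<close>)
  have cwxt: "continuous_on ({-\<delta>..L+\<delta>} \<times> {t-\<delta>..t+\<delta>}) (\<lambda>p. wxt (fst p) (snd p))"
    by (rule continuous_on_subset[OF wxt_cont]) (use bU in \<open>auto simp: L_def\<close>)
  have I1: "((\<lambda>s. integral {0..l s} (\<lambda>x. (w x s)\<^sup>2)) has_real_derivative
            (integral {0..L} (\<lambda>x. 2 * w x t * wt x t) + (w L t)\<^sup>2 * (rg * X t $ 1))) (at t within {0..})"
  proof (rule moving_int[OF d L_def Lp _ _ _ ld _ lT])
    fix x s assume "x \<in> {-\<delta>..L+\<delta>}" "s \<in> {t-\<delta>..t+\<delta>}"
    then have "((\<lambda>s. w x s) has_real_derivative wt x s) (at s)" by (intro w_s inU)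
    then show "((\<lambda>s. (w x s)\<^sup>2) has_real_derivative 2 * w x s * wt x s) (at s)"
      by (auto intro!: derivative_eq_intros)
  next
    show "continuous_on ({-\<delta>..L+\<delta>} \<times> {t-\<delta>..t+\<delta>}) (\<lambda>p. (w (fst p) (snd p))\<^sup>2)"
      by (intro continuous_intros cw)
    show "continuous_on ({-\<delta>..L+\<delta>} \<times> {t-\<delta>..t+\<delta>}) (\<lambda>p. 2 * w (fst p) (snd p) * wt (fst p) (snd p))"
      by (intro continuous_intros cw cwt)
  qed (use t in auto)
  have I2: "((\<lambda>s. integral {0..l s} (\<lambda>x. (wx x s)\<^sup>2)) has_real_derivative
            (integral {0..L} (\<lambda>x. 2 * wx x t * wxt x t) + (wx L t)\<^sup>2 * (rg * X t $ 1))) (at t within {0..})"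
  proof (rule moving_int[OF d L_def Lp _ _ _ ld _ lT])
    fix x s assume "x \<in> {-\<delta>..L+\<delta>}" "s \<in> {t-\<delta>..t+\<delta>}"
    then have "((\<lambda>s. wx x s) has_real_derivative wxt x s) (at s)" by (intro wx_s inU)
    then show "((\<lambda>s. (wx x s)\<^sup>2) has_real_derivative 2 * wx x s * wxt x s) (at s)"
      by (auto intro!: derivative_eq_intros)
  next
    show "continuous_on ({-\<delta>..L+\<delta>} \<times> {t-\<delta>..t+\<delta>}) (\<lambda>p. (wx (fst p) (snd p))\<^sup>2)"
      by (intro continuous_intros cwx)
    show "continuous_on ({-\<delta>..L+\<delta>} \<times> {t-\<delta>..t+\<delta>}) (\<lambda>p. 2 * wx (fst p) (snd p) * wxt (fst p) (snd p))"
      by (intro continuous_intros cwx cwxt)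
  qed (use t in auto)
  have wL: "w L t = 0" using bcl t by (simp add: L_def)
  have W0: "((\<lambda>s. (w 0 s)\<^sup>2) has_real_derivative 2 * w 0 t * wt 0 t) (at t within {0..})"
  proof -
    have "(0, t) \<in> U" using inU d Lp by auto
    then have "((\<lambda>s. w 0 s) has_real_derivative wt 0 t) (at t)" by (rule w_s)
    then have "((\<lambda>s. (w 0 s)\<^sup>2) has_real_derivative 2 * w 0 t * wt 0 t) (at t)"
      by (auto intro!: derivative_eq_intros)
    then show ?thesis by (rule has_field_derivative_at_within)
  qed
  have XP: "((\<lambda>s. X s \<bullet> (P *v X s)) has_real_derivative 2 * (X t \<bullet> (P *v (Mm *v X t + wx (l t) t *\<^sub>R Bb)))) (at t within {0..})"
    using deriv_quad[OF ode[rule_format, OF t] P_sym] .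
  have "((\<lambda>s. d1 / 2 * integral {0 .. l s} (\<lambda>x. (w x s)\<^sup>2) + 1 / 2 * integral {0 .. l s} (\<lambda>x. (wx x s)\<^sup>2)
                + gam / 2 * (w 0 s)\<^sup>2 + d2 * (X s \<bullet> (P *v X s))) has_real_derivative
          (d1 / 2 * (integral {0..L} (\<lambda>x. 2 * w x t * wt x t) + (w L t)\<^sup>2 * (rg * X t $ 1))
           + 1 / 2 * (integral {0..L} (\<lambda>x. 2 * wx x t * wxt x t) + (wx L t)\<^sup>2 * (rg * X t $ 1))
           + gam / 2 * (2 * w 0 t * wt 0 t)
           + d2 * (2 * (X t \<bullet> (P *v (Mm *v X t + wx (l t) t *\<^sub>R Bb)))))) (at t within {0..})"
    by (intro DERIV_add DERIV_cmult I1 I2 W0 XP)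
  then show ?thesis using wL by (simp add: L_def)
qed

end

context sys begin

lemma slice_in_U: "t \<ge> 0 \<Longrightarrow> x \<in> {0..l t} \<Longrightarrow> (x, t) \<in> U"
  using U_dom by auto

lemma slice_cont:
  assumes "continuous_on U (\<lambda>q. f (fst q) (snd q))" "t \<ge> 0"
  shows "continuous_on {0..l t} (\<lambda>x. f x t)"
proof -
  have "continuous_on {0..l t} ((\<lambda>q. f (fst q) (snd q)) \<circ> (\<lambda>x. (x, t)))"
    by (rule continuous_on_compose, force intro!: continuous_intros, rule continuous_on_subset[OF assms(1)])
       (use slice_in_U[OF assms(2)] in auto)
  then show ?thesis by (simp add: o_def)
qed

lemma wt_deriv_x:
  assumes t: "t \<ge> 0" and y: "y \<in> {0..l t}"
  shows "((\<lambda>y. wt y t) has_real_derivative wxt y t) (at y within {0..l t})"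
proof -
  obtain \<delta> where d: "\<delta> > 0" and bU: "{-\<delta>..l t+\<delta>} \<times> {t-\<delta>..t+\<delta>} \<subseteq> U" using box_U[OF t] by blast
  define L where "L = l t"
  have Ld: "l t = L" by (simp add: L_def)
  have inU: "(x, s) \<in> U" if "x \<in> {-\<delta>..L+\<delta>}" "s \<in> {t-\<delta>..t+\<delta>}" for x s
    using bU that by (auto simp: L_def)
  have ballsub: "ball t \<delta> \<subseteq> {t-\<delta>..t+\<delta>}" by (auto simp: dist_real_def)
  have key: "integral {0..z} (\<lambda>x. wxt x t) = wt z t - wt 0 t" if z: "z \<in> {0..L}" for z
  proof -
    have G: "((\<lambda>s. integral (cbox 0 z) (\<lambda>x. wx x s)) has_field_derivative integral (cbox 0 z) (\<lambda>x. wxt x t))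
            (at t within ball t \<delta>)"
    proof (rule leibniz_rule_field_derivative[where f="\<lambda>s x. wx x s" and fx="\<lambda>s x. wxt x s"])
      fix s x assume s: "s \<in> ball t \<delta>" and x: "x \<in> cbox 0 z"
      have x': "x \<in> {0..z}" using x by (simp only: box_real(2))
      have "x \<in> {-\<delta>..L+\<delta>}" using x' z d by simp
      moreover have "s \<in> {t-\<delta>..t+\<delta>}" using s ballsub by blast
      ultimately have "(x, s) \<in> U" by (rule inU)
      then show "((\<lambda>s. wx x s) has_field_derivative wxt x s) (at s within ball t \<delta>)"
        by (rule has_field_derivative_at_within[OF wx_s])
    next
      fix s assume "s \<in> ball t \<delta>"
      have "continuous_on ({-\<delta>..L+\<delta>} \<times> {t-\<delta>..t+\<delta>}) (\<lambda>p. wx (fst p) (snd p))"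
        by (rule continuous_on_subset[OF wx_cont]) (use bU in \<open>auto simp: L_def\<close>)
      moreover have "{0..z} \<subseteq> {-\<delta>..L+\<delta>}" using z d by auto
      moreover have "s \<in> {t-\<delta>..t+\<delta>}" using \<open>s \<in> ball t \<delta>\<close> ballsub by blast
      ultimately have "continuous_on {0..z} (\<lambda>x. wx x s)"
        by (rule cont_slice)
      then show "(\<lambda>x. wx x s) integrable_on cbox 0 z" by (simp add: integrable_continuous_real)
    next
      have c1: "continuous_on ({-\<delta>..L+\<delta>} \<times> {t-\<delta>..t+\<delta>}) (\<lambda>p. wxt (fst p) (snd p))"
        by (rule continuous_on_subset[OF wxt_cont]) (use bU in \<open>auto simp: L_def\<close>)
      have c2: "cbox 0 z \<subseteq> {-\<delta>..L+\<delta>}" using z d by (simp only: box_real(2)) auto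
      have "continuous_on (ball t \<delta> \<times> cbox 0 z) (\<lambda>p. wxt (snd p) (fst p))"
        by (rule cont_swap[OF c1 ballsub c2])
      then show "continuous_on (ball t \<delta> \<times> cbox 0 z) (\<lambda>(s, x). wxt x s)" by (simp add: case_prod_unfold)
    qed (use d in auto)
    have atw: "at t within ball t \<delta> = at t" by (rule at_within_open) (use d in auto)
    have cb: "cbox 0 z = {0..z}" by (rule box_real(2))
    have G': "((\<lambda>s. integral (cbox 0 z) (\<lambda>x. wx x s)) has_field_derivative integral {0..z} (\<lambda>x. wxt x t)) (at t)"
      using G unfolding atw cb .
    have eq: "integral (cbox 0 z) (\<lambda>x. wx x s) = w z s - w 0 s" if s: "s \<in> ball t \<delta>" for s
    proof -
      have "((\<lambda>x. wx x s) has_integral (w z s - w 0 s)) {0..z}"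
      proof (rule fundamental_theorem_of_calculus)
        show "0 \<le> z" using z by auto
        fix x assume "x \<in> {0..z}"
        then have "(x, s) \<in> U" using z s ballsub d by (intro inU) auto
        then have "((\<lambda>x. w x s) has_real_derivative wx x s) (at x within {0..z})"
          by (rule has_field_derivative_at_within[OF w_x])
        then show "((\<lambda>x. w x s) has_vector_derivative wx x s) (at x within {0..z})"
          by (simp add: has_real_derivative_iff_has_vector_derivative)
      qed
      then show ?thesis by (simp add: integral_unique)
    qed
    have D2: "((\<lambda>s. integral (cbox 0 z) (\<lambda>x. wx x s)) has_field_derivative wt z t - wt 0 t) (at t)"
    proof (rule has_field_derivative_transform_within_open[where S="ball t \<delta>"])
      have "(z, t) \<in> U" "(0, t) \<in> U" using z d by (auto intro!: inU)
      then show "((\<lambda>s. w z s - w 0 s) has_field_derivative wt z t - wt 0 t) (at t)"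
        by (intro DERIV_diff w_s)
    qed (use d eq in auto)
    show ?thesis using DERIV_unique[OF G' D2] .
  qed
  have cwxt: "continuous_on {0..L} (\<lambda>x. wxt x t)" unfolding L_def by (rule slice_cont[OF wxt_cont t])
  have "((\<lambda>u. integral {0..u} (\<lambda>x. wxt x t)) has_vector_derivative wxt y t) (at y within {0..L})"
    by (rule integral_has_vector_derivative[OF cwxt]) (use y in \<open>simp add: L_def\<close>)
  then have "((\<lambda>u. integral {0..u} (\<lambda>x. wxt x t)) has_real_derivative wxt y t) (at y within {0..L})"
    by (simp add: has_real_derivative_iff_has_vector_derivative)
  from DERIV_add[OF DERIV_const[of "wt 0 t"] this]
  have "((\<lambda>u. wt 0 t + integral {0..u} (\<lambda>x. wxt x t)) has_real_derivative wxt y t) (at y within {0..L})"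
    by simp
  then show ?thesis unfolding Ld
    by (rule has_field_derivative_transform_within[where d=1]) (use y key Ld in auto)
qed

lemma at_ge0_nonbot: assumes t: "(t::real) \<ge> 0" shows "at t within {0..} \<noteq> bot"
proof
  assume "at t within {0..} = bot"
  moreover have "at t within {t<..} \<le> at t within {0..}" by (rule at_le) (use t in auto)
  ultimately show False by (simp add: bot_unique)
qed

lemma wt_L:
  assumes t: "t \<ge> 0"
  shows "wt (l t) t = - (rg * X t $ 1) * wx (l t) t"
proof -
  define v where "v = rg * X t $ 1"
  have ld: "(l has_real_derivative v) (at t within {0..})" unfolding v_def by (rule l_deriv[OF t])
  have g: "((\<lambda>s. (l s, s)) has_derivative (\<lambda>h. (v * h, h))) (at t within {0..})"
    using ld unfolding has_field_derivative_def by (intro has_derivative_Pair has_derivative_ident)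
  have inU: "(l t, t) \<in> U" using slice_in_U[OF t] l_pos t by auto
  have "((\<lambda>q. w (fst q) (snd q)) has_derivative (\<lambda>h. wx (l t) t * fst h + wt (l t) t * snd h)) (at (l t, t))"
    using bspec[OF w_deriv inU] by simp
  then have wd: "((\<lambda>q. w (fst q) (snd q)) has_derivative (\<lambda>h. wx (l t) t * fst h + wt (l t) t * snd h)) (at (l t, t) within (\<lambda>s. (l s, s)) ` {0..})"
    by (rule has_derivative_at_withinI)
  have "(((\<lambda>q. w (fst q) (snd q)) \<circ> (\<lambda>s. (l s, s))) has_derivative
        ((\<lambda>h. wx (l t) t * fst h + wt (l t) t * snd h) \<circ> (\<lambda>h. (v * h, h)))) (at t within {0..})"
    by (rule diff_chain_within[OF g]) (use wd in simp)
  moreover have e1: "((\<lambda>q. w (fst q) (snd q)) \<circ> (\<lambda>s. (l s, s))) = (\<lambda>s. w (l s) s)" by (simp add: fun_eq_iff)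
  moreover have e2: "((\<lambda>h. wx (l t) t * fst h + wt (l t) t * snd h) \<circ> (\<lambda>h. (v * h, h))) = (*) (wx (l t) t * v + wt (l t) t)"
    by (simp add: fun_eq_iff algebra_simps)
  ultimately have d1: "((\<lambda>s. w (l s) s) has_real_derivative (wx (l t) t * v + wt (l t) t)) (at t within {0..})"
    unfolding has_field_derivative_def by simp
  have "((\<lambda>s. 0::real) has_real_derivative 0) (at t within {0..})" by simp
  then have d0: "((\<lambda>s. w (l s) s) has_real_derivative 0) (at t within {0..})"
    by (rule has_field_derivative_transform_within[where d=1]) (use t bcl in auto)
  have "wx (l t) t * v + wt (l t) t = 0" using has_field_derivative_unique[OF d1 d0 at_ge0_nonbot[OF t]] .
  then show ?thesis by (simp add: v_def algebra_simps)
qed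

end

lemma ftc_real:
  fixes f f' :: "real \<Rightarrow> real"
  assumes "0 \<le> L" "\<And>x. x \<in> {0..L} \<Longrightarrow> (f has_real_derivative f' x) (at x within {0..L})"
  shows "(f' has_integral (f L - f 0)) {0..L}"
  using assms by (intro fundamental_theorem_of_calculus) (auto simp: has_real_derivative_iff_has_vector_derivative)

context sys begin

lemma int_facts:
  fixes kk nX eps :: real
  assumes t: "t \<ge> 0" and eps: "eps > 0" and kk: "kk \<ge> 0" and nX: "nX \<ge> 0"
    and Fb: "\<And>x. 0 < x \<Longrightarrow> x < l t \<Longrightarrow> \<bar>D * wxx x t - a * wx x t - g * w x t - wt x t\<bar> \<le> kk * nX"
  defines "L \<equiv> l t"
    and "Fv \<equiv> (\<lambda>x. D * wxx x t - a * wx x t - g * w x t - wt x t)"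
  defines "W1 \<equiv> integral {0..L} (\<lambda>x. (w x t)\<^sup>2)"
    and "W2 \<equiv> integral {0..L} (\<lambda>x. (wx x t)\<^sup>2)"
    and "W3 \<equiv> integral {0..L} (\<lambda>x. (wxx x t)\<^sup>2)"
    and "A1 \<equiv> integral {0..L} (\<lambda>x. w x t * Fv x)"
    and "A2 \<equiv> integral {0..L} (\<lambda>x. wxx x t * Fv x)"
  shows "integral {0..L} (\<lambda>x. 2 * w x t * wt x t)
           = 2 * (D * (- gam * (w 0 t)\<^sup>2 - W2) + a * (w 0 t)\<^sup>2 / 2 - g * W1 - A1)"
    and "integral {0..L} (\<lambda>x. 2 * wx x t * wxt x t)
           = 2 * (- (rg * X t $ 1) * (wx L t)\<^sup>2 - gam * w 0 t * wt 0 t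
                  - (D * W3 - a * ((wx L t)\<^sup>2 - gam\<^sup>2 * (w 0 t)\<^sup>2) / 2 + g * (gam * (w 0 t)\<^sup>2 + W2) - A2))"
    and "(wx L t)\<^sup>2 \<le> gam\<^sup>2 * (w 0 t)\<^sup>2 + W2 / eps + eps * W3"
    and "W1 \<ge> 0" "W2 \<ge> 0" "W3 \<ge> 0"
    and "- A1 \<le> kk * (L * nX\<^sup>2 + W1) / 2"
    and "A2 \<le> D / 4 * W3 + L * (kk * nX)\<^sup>2 / D"
proof -
  have Lp: "L > 0" using l_pos t by (simp add: L_def)
  have inU: "x \<in> {0..L} \<Longrightarrow> (x, t) \<in> U" for x using slice_in_U[OF t] by (simp add: L_def)
  have cw: "continuous_on {0..L} (\<lambda>x. w x t)" unfolding L_def by (rule slice_cont[OF w_cont t])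
  have cwx: "continuous_on {0..L} (\<lambda>x. wx x t)" unfolding L_def by (rule slice_cont[OF wx_cont t])
  have cwt: "continuous_on {0..L} (\<lambda>x. wt x t)" unfolding L_def by (rule slice_cont[OF wt_cont t])
  have cwxx: "continuous_on {0..L} (\<lambda>x. wxx x t)" unfolding L_def by (rule slice_cont[OF wxx_cont t])
  have cF: "continuous_on {0..L} Fv" unfolding Fv_def by (intro continuous_intros cw cwx cwt cwxx)
  have dw: "x \<in> {0..L} \<Longrightarrow> ((\<lambda>x. w x t) has_real_derivative wx x t) (at x within {0..L})" for x
    by (rule has_field_derivative_at_within[OF w_x[OF inU]])
  have dwx: "x \<in> {0..L} \<Longrightarrow> ((\<lambda>x. wx x t) has_real_derivative wxx x t) (at x within {0..L})" for x
    by (rule has_field_derivative_at_within[OF wx_x[OF inU]])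
  have dwt: "x \<in> {0..L} \<Longrightarrow> ((\<lambda>x. wt x t) has_real_derivative wxt x t) (at x within {0..L})" for x
    unfolding L_def by (rule wt_deriv_x[OF t]) (simp add: L_def)
  have wL: "w L t = 0" using bcl t by (simp add: L_def)
  have wx0: "wx 0 t = gam * w 0 t" using bc0 t by simp
  have wtL: "wt L t = - (rg * X t $ 1) * wx L t" using wt_L[OF t] by (simp add: L_def)
  have ii: "(f has_integral integral {0..L} f) {0..L}" if "continuous_on {0..L} f" for f :: "real \<Rightarrow> real"
    using integrable_continuous_real[OF that] by (rule integrable_integral)
  have iW1: "((\<lambda>x. (w x t)\<^sup>2) has_integral W1) {0..L}" unfolding W1_def by (intro ii continuous_intros cw)
  have iW2: "((\<lambda>x. (wx x t)\<^sup>2) has_integral W2) {0..L}" unfolding W2_def by (intro ii continuous_intros cwx)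
  have iW3: "((\<lambda>x. (wxx x t)\<^sup>2) has_integral W3) {0..L}" unfolding W3_def by (intro ii continuous_intros cwxx)
  have iA1: "((\<lambda>x. w x t * Fv x) has_integral A1) {0..L}" unfolding A1_def by (intro ii continuous_intros cw cF)
  have iA2: "((\<lambda>x. wxx x t * Fv x) has_integral A2) {0..L}" unfolding A2_def by (intro ii continuous_intros cwxx cF)
  have F1: "((\<lambda>x. wx x t * wx x t + wxx x t * w x t) has_integral (w L t * wx L t - w 0 t * wx 0 t)) {0..L}"
    using Lp by (intro ftc_real[where f="\<lambda>x. w x t * wx x t"] DERIV_mult dw dwx) auto
  have F2: "((\<lambda>x. wx x t * w x t + wx x t * w x t) has_integral (w L t * w L t - w 0 t * w 0 t)) {0..L}"
    using Lp by (intro ftc_real[where f="\<lambda>x. w x t * w x t"] DERIV_mult dw) auto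
  have F3: "((\<lambda>x. wxx x t * wx x t + wxx x t * wx x t) has_integral (wx L t * wx L t - wx 0 t * wx 0 t)) {0..L}"
    using Lp by (intro ftc_real[where f="\<lambda>x. wx x t * wx x t"] DERIV_mult dwx) auto
  have F4: "((\<lambda>x. wxx x t * wt x t + wxt x t * wx x t) has_integral (wx L t * wt L t - wx 0 t * wt 0 t)) {0..L}"
    using Lp by (intro ftc_real[where f="\<lambda>x. wx x t * wt x t"] DERIV_mult dwx dwt) auto
  have H1: "((\<lambda>x. 2 * D * ((wx x t * wx x t + wxx x t * w x t) - (wx x t)\<^sup>2)
                 - a * (wx x t * w x t + wx x t * w x t) - 2 * g * (w x t)\<^sup>2 - 2 * (w x t * Fv x))
            has_integral (2 * D * ((w L t * wx L t - w 0 t * wx 0 t) - W2) - a * (w L t * w L t - w 0 t * w 0 t)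
                 - 2 * g * W1 - 2 * A1)) {0..L}"
    by (intro has_integral_diff has_integral_mult_right F1 F2 iW1 iW2 iA1)
  have "((\<lambda>x. 2 * w x t * wt x t) has_integral (2 * D * ((w L t * wx L t - w 0 t * wx 0 t) - W2) - a * (w L t * w L t - w 0 t * w 0 t)
                 - 2 * g * W1 - 2 * A1)) {0..L}"
    by (rule has_integral_eq[OF _ H1]) (simp add: Fv_def algebra_simps power2_eq_square)
  then have "integral {0..L} (\<lambda>x. 2 * w x t * wt x t) = 2 * D * ((w L t * wx L t - w 0 t * wx 0 t) - W2) - a * (w L t * w L t - w 0 t * w 0 t)
                 - 2 * g * W1 - 2 * A1" by (rule integral_unique)
  then show "integral {0..L} (\<lambda>x. 2 * w x t * wt x t)
           = 2 * (D * (- gam * (w 0 t)\<^sup>2 - W2) + a * (w 0 t)\<^sup>2 / 2 - g * W1 - A1)"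
    by (simp add: wL wx0 algebra_simps power2_eq_square)
  have H2: "((\<lambda>x. 2 * (wxx x t * wt x t + wxt x t * wx x t) - 2 * D * (wxx x t)\<^sup>2
                 + a * (wxx x t * wx x t + wxx x t * wx x t)
                 + 2 * g * ((wx x t * wx x t + wxx x t * w x t) - (wx x t)\<^sup>2) + 2 * (wxx x t * Fv x))
            has_integral (2 * (wx L t * wt L t - wx 0 t * wt 0 t) - 2 * D * W3
                 + a * (wx L t * wx L t - wx 0 t * wx 0 t)
                 + 2 * g * ((w L t * wx L t - w 0 t * wx 0 t) - W2) + 2 * A2)) {0..L}"
    by (intro has_integral_diff has_integral_add has_integral_mult_right F1 F3 F4 iW2 iW3 iA2)
  have "((\<lambda>x. 2 * wx x t * wxt x t) has_integral (2 * (wx L t * wt L t - wx 0 t * wt 0 t) - 2 * D * W3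
                 + a * (wx L t * wx L t - wx 0 t * wx 0 t)
                 + 2 * g * ((w L t * wx L t - w 0 t * wx 0 t) - W2) + 2 * A2)) {0..L}"
    by (rule has_integral_eq[OF _ H2]) (simp add: Fv_def algebra_simps power2_eq_square)
  then have "integral {0..L} (\<lambda>x. 2 * wx x t * wxt x t) = 2 * (wx L t * wt L t - wx 0 t * wt 0 t) - 2 * D * W3
                 + a * (wx L t * wx L t - wx 0 t * wx 0 t)
                 + 2 * g * ((w L t * wx L t - w 0 t * wx 0 t) - W2) + 2 * A2" by (rule integral_unique)
  then show "integral {0..L} (\<lambda>x. 2 * wx x t * wxt x t)
           = 2 * (- (rg * X t $ 1) * (wx L t)\<^sup>2 - gam * w 0 t * wt 0 t
                  - (D * W3 - a * ((wx L t)\<^sup>2 - gam\<^sup>2 * (w 0 t)\<^sup>2) / 2 + g * (gam * (w 0 t)\<^sup>2 + W2) - A2))"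
    by (simp add: wL wx0 wtL field_simps power2_eq_square)
  have H3: "((\<lambda>x. (1 / eps) * (wx x t)\<^sup>2 + eps * (wxx x t)\<^sup>2) has_integral ((1 / eps) * W2 + eps * W3)) {0..L}"
    by (intro has_integral_add has_integral_mult_right iW2 iW3)
  have "wx L t * wx L t - wx 0 t * wx 0 t \<le> (1 / eps) * W2 + eps * W3"
  proof (rule has_integral_le[OF F3 H3])
    fix x
    have "0 \<le> (wx x t / sqrt eps - sqrt eps * wxx x t)\<^sup>2" by simp
    also have "\<dots> = (1 / eps) * (wx x t)\<^sup>2 + eps * (wxx x t)\<^sup>2 - 2 * wx x t * wxx x t"
      using eps by (simp add: power2_diff power_divide field_simps)
    finally show "wxx x t * wx x t + wxx x t * wx x t \<le> (1 / eps) * (wx x t)\<^sup>2 + eps * (wxx x t)\<^sup>2"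
      by (simp add: algebra_simps)
  qed
  then show "(wx L t)\<^sup>2 \<le> gam\<^sup>2 * (w 0 t)\<^sup>2 + W2 / eps + eps * W3"
    by (simp add: wx0 power2_eq_square algebra_simps)
  show "W1 \<ge> 0" using iW1 by (rule has_integral_nonneg) simp
  show "W2 \<ge> 0" using iW2 by (rule has_integral_nonneg) simp
  show "W3 \<ge> 0" using iW3 by (rule has_integral_nonneg) simp
  have Fbc: "\<bar>Fv x\<bar> \<le> kk * nX" if x: "x \<in> {0..L}" for x
  proof (rule continuous_le_on_closure[where S="{0<..<L}" and f="\<lambda>x. \<bar>Fv x\<bar>"])
    show "continuous_on (closure {0<..<L}) (\<lambda>x. \<bar>Fv x\<bar>)" using Lp cF by (simp add: continuous_on_rabs)
    show "x \<in> closure {0<..<L}" using Lp x by simp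
    show "\<And>x. x \<in> {0<..<L} \<Longrightarrow> \<bar>Fv x\<bar> \<le> kk * nX" using Fb by (auto simp: Fv_def L_def)
  qed
  have H5: "((\<lambda>x. kk / 2 * nX\<^sup>2 + kk / 2 * (w x t)\<^sup>2) has_integral (L * (kk / 2 * nX\<^sup>2) + kk / 2 * W1)) {0..L}"
  proof -
    have "((\<lambda>x. kk / 2 * nX\<^sup>2) has_integral (L * (kk / 2 * nX\<^sup>2))) {0..L}"
      using has_integral_const_real[of "kk / 2 * nX\<^sup>2" 0 L] Lp by simp
    then show ?thesis by (intro has_integral_add has_integral_mult_right iW1)
  qed
  have iA1': "((\<lambda>x. - (w x t * Fv x)) has_integral - A1) {0..L}" by (rule has_integral_neg[OF iA1])
  have "- A1 \<le> L * (kk / 2 * nX\<^sup>2) + kk / 2 * W1"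
  proof (rule has_integral_le[OF iA1' H5])
    fix x assume x: "x \<in> {0..L}"
    have "- (w x t * Fv x) \<le> \<bar>w x t\<bar> * \<bar>Fv x\<bar>" by (simp add: abs_mult[symmetric])
    also have "\<dots> \<le> \<bar>w x t\<bar> * (kk * nX)" using Fbc[OF x] by (intro mult_left_mono) auto
    also have "\<dots> = kk * (\<bar>w x t\<bar> * nX)" by simp
    also have "\<dots> \<le> kk * ((nX\<^sup>2 + (w x t)\<^sup>2) / 2)"
    proof (rule mult_left_mono[OF _ kk])
      have "0 \<le> (\<bar>w x t\<bar> - nX)\<^sup>2" by simp
      then show "\<bar>w x t\<bar> * nX \<le> (nX\<^sup>2 + (w x t)\<^sup>2) / 2"
        by (simp add: power2_diff algebra_simps)
    qed
    finally show "- (w x t * Fv x) \<le> kk / 2 * nX\<^sup>2 + kk / 2 * (w x t)\<^sup>2" by (simp add: algebra_simps)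
  qed
  then show "- A1 \<le> kk * (L * nX\<^sup>2 + W1) / 2" by (simp add: algebra_simps)
  have H6: "((\<lambda>x. D / 4 * (wxx x t)\<^sup>2 + (kk * nX)\<^sup>2 / D) has_integral (D / 4 * W3 + L * ((kk * nX)\<^sup>2 / D))) {0..L}"
  proof -
    have "((\<lambda>x. (kk * nX)\<^sup>2 / D) has_integral (L * ((kk * nX)\<^sup>2 / D))) {0..L}"
      using has_integral_const_real[of "(kk * nX)\<^sup>2 / D" 0 L] Lp by simp
    then show ?thesis by (intro has_integral_add has_integral_mult_right iW3)
  qed
  have "A2 \<le> D / 4 * W3 + L * ((kk * nX)\<^sup>2 / D)"
  proof (rule has_integral_le[OF iA2 H6])
    fix x assume x: "x \<in> {0..L}"
    have Dp: "D > 0" by (rule D_pos)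
    have "wxx x t * Fv x \<le> D / 4 * (wxx x t)\<^sup>2 + (Fv x)\<^sup>2 / D"
    proof -
      have "0 \<le> (D / 2 * wxx x t - Fv x)\<^sup>2 / D" using Dp by simp
      also have "\<dots> = D / 4 * (wxx x t)\<^sup>2 + (Fv x)\<^sup>2 / D - wxx x t * Fv x"
        using Dp by (simp add: power2_diff field_simps power2_eq_square)
      finally show ?thesis by simp
    qed
    also have "(Fv x)\<^sup>2 \<le> (kk * nX)\<^sup>2"
    proof -
      have "\<bar>Fv x\<bar>\<^sup>2 \<le> (kk * nX)\<^sup>2" using Fbc[OF x] by (intro power_mono) auto
      then show ?thesis by simp
    qed
    then have "D / 4 * (wxx x t)\<^sup>2 + (Fv x)\<^sup>2 / D \<le> D / 4 * (wxx x t)\<^sup>2 + (kk * nX)\<^sup>2 / D"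
      using Dp by (simp add: divide_right_mono)
    finally show "wxx x t * Fv x \<le> D / 4 * (wxx x t)\<^sup>2 + (kk * nX)\<^sup>2 / D" .
  qed
  then show "A2 \<le> D / 4 * W3 + L * (kk * nX)\<^sup>2 / D" by simp
qed

end

lemma F_bound:
  assumes D: "D > 0"
  shows "\<exists>cF>0. \<forall>L x Xv. 0 < x \<and> x < L \<and> L \<le> lbar \<longrightarrow> \<bar>Ffun D a g A B C K L x Xv\<bar> \<le> cF * norm Xv"
proof -
  obtain Bd where Bd: "Bd > 0" "\<forall>y\<in>{-lbar..0}. norm (phi D a g A B C K y) \<le> Bd \<and>
        norm (vector_derivative (phi D a g A B C K) (at y)) \<le> Bd"
    using phi_bounds[of lbar D a g A B C K] by blast
  define cF where "cF = Bd + Bd * norm B * norm C / D + 1"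
  have cFp: "cF > 0" unfolding cF_def using Bd D by (simp add: add_nonneg_pos)
  have "\<bar>Ffun D a g A B C K L x Xv\<bar> \<le> cF * norm Xv" if h: "0 < x" "x < L" "L \<le> lbar" for L x Xv
  proof -
    define y where "y = x - L"
    have y: "y \<in> {-lbar..0}" using h by (auto simp: y_def)
    define pv where "pv = vector_derivative (phi D a g A B C K) (at y)"
    define p0 where "p0 = phi D a g A B C K y"
    have pv: "norm pv \<le> Bd" and p0: "norm p0 \<le> Bd" using Bd(2) y by (auto simp: pv_def p0_def)
    have t1: "\<bar>pv \<bullet> Xv\<bar> \<le> Bd * norm Xv"
      using Cauchy_Schwarz_ineq2[of pv Xv] pv by (meson mult_right_mono norm_ge_zero order_trans)
    have "\<bar>p0 \<bullet> B\<bar> \<le> Bd * norm B"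
      using Cauchy_Schwarz_ineq2[of p0 B] p0 by (meson mult_right_mono norm_ge_zero order_trans)
    then have k: "\<bar>kker D a g A B C K x L\<bar> \<le> Bd * norm B / D"
      using D by (simp add: kker_def p0_def y_def abs_mult divide_right_mono)
    have c: "\<bar>C \<bullet> Xv\<bar> \<le> norm C * norm Xv" by (rule Cauchy_Schwarz_ineq2)
    have "\<bar>kker D a g A B C K x L * (C \<bullet> Xv)\<bar> \<le> (Bd * norm B / D) * (norm C * norm Xv)"
      unfolding abs_mult by (rule mult_mono[OF k c]) (use Bd D in auto)
    then have t2: "\<bar>kker D a g A B C K x L * (C \<bullet> Xv)\<bar> \<le> Bd * norm B * norm C / D * norm Xv" by simp
    have "\<bar>Ffun D a g A B C K L x Xv\<bar> \<le> \<bar>pv \<bullet> Xv\<bar> + \<bar>kker D a g A B C K x L * (C \<bullet> Xv)\<bar>"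
      unfolding Ffun_def pv_def y_def by (rule abs_triangle_ineq4)
    also have "\<dots> \<le> Bd * norm Xv + Bd * norm B * norm C / D * norm Xv" using t1 t2 by linarith
    also have "\<dots> \<le> cF * norm Xv" unfolding cF_def by (simp add: algebra_simps)
    finally show ?thesis .
  qed
  then show ?thesis using cFp by blast
qed

theorem lemma1:
  fixes D a g rg lc cinf atil beta ls gam lbar :: real
    and K :: "real^2" and P Q :: "real^2^2"
    and X :: "real \<Rightarrow> real^2" and l :: "real \<Rightarrow> real"
    and w wx wt wxx wxt :: "real \<Rightarrow> real \<Rightarrow> real"
    and U :: "(real \<times> real) set"
  assumes D_pos: "D > 0" and g_pos: "g > 0" and rg_pos: "rg > 0" and lc_pos: "lc > 0"
    and cinf_pos: "cinf > 0" and ls_pos: "ls > 0" and gam_pos: "gam > 0"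
    and gam_ge: "gam \<ge> a / D" and lbar_gt: "lbar > ls"
    and K_hurwitz: "hurwitz (Amat atil rg + outer (Bvec beta) K)"
    and P_pd: "pos_def P" and Q_pd: "pos_def Q"
    and lyap: "transpose (Amat atil rg + outer (Bvec beta) K) ** P + P ** (Amat atil rg + outer (Bvec beta) K) = - Q"
    \<comment> \<open>the moving boundary l(t) = l_s + z_2(t)\<close>
    and l_def: "\<forall>t. l t = ls + X t $ 2"
    \<comment> \<open>classical regularity: w, w_x are C^1 on an open set containing the closed domain\<close>
    and U_open: "open U"
    and U_dom: "{(x, t). 0 \<le> t \<and> 0 \<le> x \<and> x \<le> l t} \<subseteq> U"
    and w_deriv: "\<forall>p\<in>U. ((\<lambda>q. w (fst q) (snd q)) has_derivative
                      (\<lambda>h. wx (fst p) (snd p) * fst h + wt (fst p) (snd p) * snd h)) (at p)"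
    and wx_deriv: "\<forall>p\<in>U. ((\<lambda>q. wx (fst q) (snd q)) has_derivative
                      (\<lambda>h. wxx (fst p) (snd p) * fst h + wxt (fst p) (snd p) * snd h)) (at p)"
    and wt_cont: "continuous_on U (\<lambda>q. wt (fst q) (snd q))"
    and wxx_cont: "continuous_on U (\<lambda>q. wxx (fst q) (snd q))"
    and wxt_cont: "continuous_on U (\<lambda>q. wxt (fst q) (snd q))"
    \<comment> \<open>the target system (with \<dot>l(t) = r_g z_1(t))\<close>
    and pde: "\<forall>t\<ge>0. \<forall>x. 0 < x \<and> x < l t \<longrightarrow>
                wt x t = D * wxx x t - a * wx x t - g * w x t
                  - (rg * X t $ 1) * Ffun D a g (Amat atil rg) (Bvec beta) (Cvec D a g lc cinf) K (l t) x (X t)"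
    and bc0: "\<forall>t\<ge>0. wx 0 t = gam * w 0 t"
    and bcl: "\<forall>t\<ge>0. w (l t) t = 0"
    and ode: "\<forall>t\<ge>0. (X has_vector_derivative
                ((Amat atil rg + outer (Bvec beta) K) *v X t + wx (l t) t *\<^sub>R Bvec beta)) (at t within {0..})"
    \<comment> \<open>a priori bounds\<close>
    and l_bounds: "\<forall>t\<ge>0. 0 < l t \<and> l t \<le> lbar"
    and ldot_bound: "\<forall>t\<ge>0. \<bar>rg * X t $ 1\<bar> \<le> min (g / (4 * gam)) (D / (8 * lbar))"
  shows "\<exists>d1min. \<forall>d1. d1 > 0 \<and> d1 \<ge> d1min \<longrightarrow>
           (\<exists>d2max > 0. \<forall>d2. 0 < d2 \<and> d2 \<le> d2max \<longrightarrow>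
             (\<exists>beta0 > 0. \<forall>t\<ge>0.
                let V = (\<lambda>s. d1 / 2 * integral {0 .. l s} (\<lambda>x. (w x s)\<^sup>2)
                           + 1 / 2 * integral {0 .. l s} (\<lambda>x. (wx x s)\<^sup>2)
                           + gam / 2 * (w 0 s)\<^sup>2 + d2 * (X s \<bullet> (P *v X s)));
                    alpha = Min {2 * g + D / (4 * lbar), (4 * g + d1 * D) / 2,
                                 lambda_min Q / (2 * lambda_max P), d2 * (2 * d1 * D + g) / 4}
                in \<exists>V'. (V has_real_derivative V') (at t within {0..}) \<and>
                        V' \<le> - alpha * V t + beta0 * V t powr (3 / 2)))"
proof -
  have P_sym: "transpose P = P" using P_pd by (simp add: pos_def_def)
  have lp: "\<forall>t\<ge>0. 0 < l t" using l_bounds by auto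
  interpret S: sys D a g rg atil beta gam ls lc cinf K P Q X l w wx wt wxx wxt U
    by (rule sys.intro) (fact D_pos gam_pos P_sym lyap l_def U_open U_dom w_deriv wx_deriv wt_cont wxx_cont wxt_cont bc0 bcl ode lp)+
  obtain cF where cF: "cF > 0" "\<forall>L x Xv. 0 < x \<and> x < L \<and> L \<le> lbar \<longrightarrow>
      \<bar>Ffun D a g (Amat atil rg) (Bvec beta) (Cvec D a g lc cinf) K L x Xv\<bar> \<le> cF * norm Xv"
    using F_bound[OF D_pos, of lbar a g "Amat atil rg" "Bvec beta" "Cvec D a g lc cinf" K] by blast
  obtain q where q: "q > 0" "\<forall>x. q * (norm x)\<^sup>2 \<le> x \<bullet> (Q *v x)" using quad_lower[OF Q_pd] by blast
  obtain pm where pm: "pm > 0" "\<forall>x. pm * (norm x)\<^sup>2 \<le> x \<bullet> (P *v x)" using quad_lower[OF P_pd] by blast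
  obtain pM where pM: "pM > 0" "\<forall>x. x \<bullet> (P *v x) \<le> pM * (norm x)\<^sup>2" using quad_upper[of P] by blast
  define pb where "pb = norm (P *v Bvec beta)"
  define vb where "vb = min (g / (4 * gam)) (D / (8 * lbar))"
  define K0 where "K0 = (\<bar>a\<bar> + vb) / 2 + 2 * pb\<^sup>2 / q + 1"
  have aD: "a \<le> D * gam" using gam_ge D_pos by (simp add: divide_le_eq mult.commute)
  have lbp: "lbar > 0" using lbar_gt ls_pos by linarith
  have vb0: "vb \<ge> 0" unfolding vb_def using g_pos gam_pos D_pos lbp by simp
  have K0p: "K0 > 0"
  proof -
    have "2 * pb\<^sup>2 / q \<ge> 0" using q by simp
    moreover have "(\<bar>a\<bar> + vb) / 2 \<ge> 0" using vb0 by simp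
    ultimately show ?thesis unfolding K0_def by linarith
  qed
  define d1min where "d1min = max (4 * K0\<^sup>2 / D\<^sup>2) ((\<bar>a\<bar> + 2 * K0) * gam / D)"
  show ?thesis
  proof (rule exI[of _ d1min], intro allI impI)
    fix d1 :: real assume d1: "d1 > 0 \<and> d1 \<ge> d1min"
    define d2max where "d2max = min 1 (min (8 * g) (2 * q / pM) / (2 * d1 * D + g))"
    have den: "2 * d1 * D + g > 0" using d1 D_pos g_pos by (simp add: add_pos_pos)
    have d2maxp: "d2max > 0" unfolding d2max_def using den g_pos q pM by simp
    show "\<exists>d2max>0. \<forall>d2. 0 < d2 \<and> d2 \<le> d2max \<longrightarrow>
             (\<exists>beta0 > 0. \<forall>t\<ge>0.
                let V = (\<lambda>s. d1 / 2 * integral {0 .. l s} (\<lambda>x. (w x s)\<^sup>2)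
                           + 1 / 2 * integral {0 .. l s} (\<lambda>x. (wx x s)\<^sup>2)
                           + gam / 2 * (w 0 s)\<^sup>2 + d2 * (X s \<bullet> (P *v X s)));
                    alpha = Min {2 * g + D / (4 * lbar), (4 * g + d1 * D) / 2,
                                 lambda_min Q / (2 * lambda_max P), d2 * (2 * d1 * D + g) / 4}
                in \<exists>V'. (V has_real_derivative V') (at t within {0..}) \<and>
                        V' \<le> - alpha * V t + beta0 * V t powr (3 / 2))"
    proof (rule exI[of _ d2max], rule conjI[OF d2maxp], intro allI impI)
      fix d2 :: real assume d2: "0 < d2 \<and> d2 \<le> d2max"
      define C3 where "C3 = d1 * rg * cF * (lbar + 1) / 2 + lbar * vb * rg * cF\<^sup>2 / D"
      define betaC where "betaC = C3 / sqrt (d2 * pm) * (1 / (d2 * pm) + 2 / d1)"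
      have C3n: "C3 \<ge> 0" unfolding C3_def using d1 rg_pos cF lbp vb0 D_pos by simp
      have bCn: "betaC \<ge> 0" unfolding betaC_def using C3n d2 pm d1 by simp
      define beta0 where "beta0 = betaC + 1"
      have b0: "beta0 > 0" unfolding beta0_def using bCn by simp
      define alpha0 where "alpha0 = d2 * (2 * d1 * D + g) / 4"
      have d2le: "d2 * (2 * d1 * D + g) \<le> min (8 * g) (2 * q / pM)"
      proof -
        have "d2 \<le> min (8 * g) (2 * q / pM) / (2 * d1 * D + g)" using d2 unfolding d2max_def by simp
        then show ?thesis using den by (simp add: le_divide_eq)
      qed
      have a0p: "alpha0 \<ge> 0" unfolding alpha0_def using d2 den by simp
      have a01: "alpha0 \<le> 2 * g" unfolding alpha0_def using d2le by simp
      have a02: "alpha0 * pM \<le> q / 2"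
      proof -
        have "d2 * (2 * d1 * D + g) \<le> 2 * q / pM" using d2le by simp
        then have "d2 * (2 * d1 * D + g) * pM \<le> 2 * q" using pM by (simp add: le_divide_eq)
        then have "(d2 * (2 * d1 * D + g) * pM) / 4 \<le> (2 * q) / 4" by (rule divide_right_mono) simp
        moreover have "alpha0 * pM = (d2 * (2 * d1 * D + g) * pM) / 4" by (simp add: alpha0_def)
        ultimately show ?thesis by linarith
      qed
      have d21: "d2 \<le> 1" using d2 unfolding d2max_def by simp
      show "\<exists>beta0 > 0. \<forall>t\<ge>0.
                let V = (\<lambda>s. d1 / 2 * integral {0 .. l s} (\<lambda>x. (w x s)\<^sup>2)
                           + 1 / 2 * integral {0 .. l s} (\<lambda>x. (wx x s)\<^sup>2)
                           + gam / 2 * (w 0 s)\<^sup>2 + d2 * (X s \<bullet> (P *v X s)));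
                    alpha = Min {2 * g + D / (4 * lbar), (4 * g + d1 * D) / 2,
                                 lambda_min Q / (2 * lambda_max P), d2 * (2 * d1 * D + g) / 4}
                in \<exists>V'. (V has_real_derivative V') (at t within {0..}) \<and>
                        V' \<le> - alpha * V t + beta0 * V t powr (3 / 2)"
      proof (rule exI[of _ beta0], rule conjI[OF b0], intro allI impI)
        fix t :: real assume t: "t \<ge> 0"
        define Vf where "Vf = (\<lambda>s. d1 / 2 * integral {0 .. l s} (\<lambda>x. (w x s)\<^sup>2)
                           + 1 / 2 * integral {0 .. l s} (\<lambda>x. (wx x s)\<^sup>2)
                           + gam / 2 * (w 0 s)\<^sup>2 + d2 * (X s \<bullet> (P *v X s)))"
        define alpha where "alpha = Min {2 * g + D / (4 * lbar), (4 * g + d1 * D) / 2,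
                                 lambda_min Q / (2 * lambda_max P), d2 * (2 * d1 * D + g) / 4}"
        define L where "L = l t"
        define nX where "nX = norm (X t)"
        define v where "v = rg * X t $ 1"
        define kk where "kk = \<bar>v\<bar> * cF"
        define eps where "eps = D / (4 * K0)"
        have Lb: "0 < L" "L \<le> lbar" using l_bounds t by (auto simp: L_def)
        have nX0: "nX \<ge> 0" by (simp add: nX_def)
        have kk0: "kk \<ge> 0" unfolding kk_def using cF by simp
        have epsp: "eps > 0" unfolding eps_def using D_pos K0p by simp
        have Fb: "\<And>x. 0 < x \<Longrightarrow> x < l t \<Longrightarrow> \<bar>D * wxx x t - a * wx x t - g * w x t - wt x t\<bar> \<le> kk * nX"
        proof -
          fix x assume x: "0 < x" "x < l t"
          have "D * wxx x t - a * wx x t - g * w x t - wt x t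
                = v * Ffun D a g (Amat atil rg) (Bvec beta) (Cvec D a g lc cinf) K (l t) x (X t)"
            using pde t x by (simp add: v_def)
          also have "\<bar>\<dots>\<bar> \<le> \<bar>v\<bar> * (cF * nX)"
            unfolding abs_mult using cF(2) x Lb by (intro mult_left_mono) (auto simp: nX_def L_def)
          finally show "\<bar>D * wxx x t - a * wx x t - g * w x t - wt x t\<bar> \<le> kk * nX"
            by (simp add: kk_def mult_ac)
        qed
        note IF = S.int_facts[OF t epsp kk0 nX0 Fb]
        note VD = S.V_deriv[OF t, of d1 d2]
        define W1 where "W1 = integral {0..L} (\<lambda>x. (w x t)\<^sup>2)"
        define W2 where "W2 = integral {0..L} (\<lambda>x. (wx x t)\<^sup>2)"
        define W3 where "W3 = integral {0..L} (\<lambda>x. (wxx x t)\<^sup>2)"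
        define Fv where "Fv = (\<lambda>x. D * wxx x t - a * wx x t - g * w x t - wt x t)"
        define A1 where "A1 = integral {0..L} (\<lambda>x. w x t * Fv x)"
        define A2 where "A2 = integral {0..L} (\<lambda>x. wxx x t * Fv x)"
        define wl where "wl = wx L t"
        define w0 where "w0 = w 0 t"
        define qX where "qX = X t \<bullet> (Q *v X t)"
        define pbX where "pbX = X t \<bullet> (P *v Bvec beta)"
        define XPX where "XPX = X t \<bullet> (P *v X t)"
        note defs = W1_def W2_def W3_def A1_def A2_def Fv_def wl_def w0_def L_def v_def
        define Vp where "Vp = d1 / 2 * integral {0..l t} (\<lambda>x. 2 * w x t * wt x t)
           + 1 / 2 * (integral {0..l t} (\<lambda>x. 2 * wx x t * wxt x t) + (wx (l t) t)\<^sup>2 * (rg * X t $ 1))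
           + gam / 2 * (2 * w 0 t * wt 0 t)
           + d2 * (2 * (X t \<bullet> (P *v (S.Mm *v X t + wx (l t) t *\<^sub>R S.Bb))))"
        have VD': "(Vf has_real_derivative Vp) (at t within {0..})" unfolding Vf_def Vp_def by (rule VD)
        have hXP: "2 * (X t \<bullet> (P *v (S.Mm *v X t + wx (l t) t *\<^sub>R S.Bb))) = - qX + 2 * wl * pbX"
        proof -
          have "2 * (X t \<bullet> (P *v (S.Mm *v X t + wx (l t) t *\<^sub>R S.Bb)))
                = 2 * (X t \<bullet> (P *v (S.Mm *v X t))) + 2 * wx (l t) t * (X t \<bullet> (P *v S.Bb))"
            by (simp add: matrix_vector_right_distrib matrix_vector_mult_scaleR inner_add_right algebra_simps)
          also have "2 * (X t \<bullet> (P *v (S.Mm *v X t))) = - qX"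
            unfolding qX_def by (rule lyap_quad[OF lyap P_sym])
          finally show ?thesis by (simp add: wl_def L_def pbX_def)
        qed
        have VpE: "Vp = - d1 * D * gam * w0\<^sup>2 - d1 * D * W2 + d1 * a * w0\<^sup>2 / 2 - d1 * g * W1 - d1 * A1
                - v * wl\<^sup>2 / 2 - D * W3 + a * wl\<^sup>2 / 2 - a * gam\<^sup>2 * w0\<^sup>2 / 2 - g * gam * w0\<^sup>2 - g * W2
                + A2 + d2 * (- qX + 2 * wl * pbX)"
        proof -
          have e1: "integral {0..l t} (\<lambda>x. 2 * w x t * wt x t) = 2 * (D * (- gam * w0\<^sup>2 - W2) + a * w0\<^sup>2 / 2 - g * W1 - A1)"
            using IF(1) by (simp add: defs)
          have e2: "integral {0..l t} (\<lambda>x. 2 * wx x t * wxt x t) = 2 * (- v * wl\<^sup>2 - gam * w0 * wt 0 t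
                  - (D * W3 - a * (wl\<^sup>2 - gam\<^sup>2 * w0\<^sup>2) / 2 + g * (gam * w0\<^sup>2 + W2) - A2))"
            using IF(2) by (simp add: defs)
          have e3: "(wx (l t) t)\<^sup>2 * (rg * X t $ 1) = wl\<^sup>2 * v" by (simp add: wl_def L_def v_def)
          show ?thesis unfolding Vp_def e1 e2 e3 hXP w0_def[symmetric]
            by (simp add: field_simps)
        qed
        have fin: "Vp \<le> - d1 * g * W1 - g * W2 - g * gam * w0\<^sup>2 - d2 * q / 2 * (nX\<^sup>2)
              + (d1 * rg * cF * (lbar + 1) / 2 + lbar * vb * rg * cF\<^sup>2 / D) * (nX * (nX\<^sup>2 + W1))"
        proof (rule final_ineq[OF D_pos g_pos gam_pos aD K0_def _ _ _ _ _ _ nX0 refl VpE])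
          show "d1 \<ge> 4 * K0\<^sup>2 / D\<^sup>2" "d1 \<ge> (\<bar>a\<bar> + 2 * K0) * gam / D" "d1 > 0" using d1 by (auto simp: d1min_def)
          show "W1 \<ge> 0" "W2 \<ge> 0" "W3 \<ge> 0" using IF(4,5,6) by (auto simp: defs)
          show "qX \<ge> q * nX\<^sup>2" using q(2) by (simp add: qX_def nX_def)
          show "q > 0" by (rule q(1))
          show "\<bar>pbX\<bar> \<le> pb * nX" unfolding pbX_def pb_def nX_def
            using Cauchy_Schwarz_ineq2[of "X t" "P *v Bvec beta"] by (simp add: mult.commute)
          show "- A1 \<le> \<bar>v\<bar> * cF * (L * nX\<^sup>2 + W1) / 2" using IF(7) by (simp add: kk_def defs)
          have "(kk * nX)\<^sup>2 = v\<^sup>2 * cF\<^sup>2 * nX\<^sup>2" by (simp add: kk_def power_mult_distrib)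
          then show "A2 \<le> D / 4 * W3 + L * v\<^sup>2 * cF\<^sup>2 * nX\<^sup>2 / D" using IF(8) by (simp add: mult.assoc defs)
          show "\<bar>v\<bar> \<le> vb" using ldot_bound t by (simp add: v_def vb_def)
          show "\<bar>v\<bar> \<le> rg * nX" unfolding v_def nX_def abs_mult
            using component_le_norm_cart[of "X t" 1] rg_pos by simp
          show "wl\<^sup>2 \<le> gam\<^sup>2 * w0\<^sup>2 + W2 / (D / (4 * K0)) + D / (4 * K0) * W3"
            using IF(3) by (simp add: eps_def defs)
          show "0 < d2" "d2 \<le> 1" using d2 d21 by auto
          show "0 \<le> L" "L \<le> lbar" using Lb by auto
          show "cF \<ge> 0" using cF by simp
          show "rg > 0" by (rule rg_pos)
        qed
        have VfE: "Vf t = d1 / 2 * W1 + 1 / 2 * W2 + gam / 2 * w0\<^sup>2 + d2 * XPX"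
          by (simp add: Vf_def W1_def W2_def L_def w0_def XPX_def)
        have al: "alpha \<le> alpha0" unfolding alpha_def alpha0_def by (rule Min_le) auto
        have tp: "Vp \<le> - alpha * Vf t + betaC * Vf t powr (3/2)"
          unfolding betaC_def
        proof (rule to_powr[OF _ VfE _ _ pm(1) _ _ nX0 refl C3n al a0p a01 a02 _ _ g_pos gam_pos])
          show "Vp \<le> - d1 * g * W1 - g * W2 - g * gam * w0\<^sup>2 - d2 * q / 2 * nX\<^sup>2 + C3 * (nX * (nX\<^sup>2 + W1))"
            using fin by (simp add: C3_def)
          show "XPX \<le> pM * nX\<^sup>2" using pM(2) by (simp add: XPX_def nX_def)
          show "pm * nX\<^sup>2 \<le> XPX" using pm(2) by (simp add: XPX_def nX_def)
          show "W1 \<ge> 0" "W2 \<ge> 0" using IF(4,5) by (auto simp: defs)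
          show "d1 > 0" "d2 > 0" using d1 d2 by auto
        qed
        have "Vf t powr (3/2) \<ge> 0" by simp
        then have "betaC * Vf t powr (3/2) \<le> beta0 * Vf t powr (3/2)"
          unfolding beta0_def by (intro mult_right_mono) auto
        with tp have "Vp \<le> - alpha * Vf t + beta0 * Vf t powr (3/2)" by linarith
        with VD' have main: "\<exists>V'. (Vf has_real_derivative V') (at t within {0..}) \<and>
                        V' \<le> - alpha * Vf t + beta0 * Vf t powr (3 / 2)" by blast
        show "let V = (\<lambda>s. d1 / 2 * integral {0 .. l s} (\<lambda>x. (w x s)\<^sup>2)
                           + 1 / 2 * integral {0 .. l s} (\<lambda>x. (wx x s)\<^sup>2)
                           + gam / 2 * (w 0 s)\<^sup>2 + d2 * (X s \<bullet> (P *v X s)));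
                    alpha = Min {2 * g + D / (4 * lbar), (4 * g + d1 * D) / 2,
                                 lambda_min Q / (2 * lambda_max P), d2 * (2 * d1 * D + g) / 4}
                in \<exists>V'. (V has_real_derivative V') (at t within {0..}) \<and>
                        V' \<le> - alpha * V t + beta0 * V t powr (3 / 2)"
          unfolding Let_def using main unfolding Vf_def alpha_def .
      qed
    qed
  qed
qed

end
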